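(* Let $r,s$ be positive integers, $Q\subseteq[r]\times[s]$, and let $I\subseteq\mathbb{K}[x]=\mathbb{K}[x_1,\dots,x_r]$ and $J\subseteq\mathbb{K}[y]=\mathbb{K}[y_1,\dots,y_s]$ be ideals homogeneous with respect to total degree. Let $F\subseteq I$ be a Gröbner basis of $I$ with respect to a weight $\omega_1\in\mathbb{R}^r$ and $G\subseteq J$ a Gröbner basis of $J$ with respect to a weight $\omega_2\in\mathbb{R}^s$, such that every element of $F$ is weakly $Q$-homogeneous with respect to $\omega_1$ and every element of $G$ is weakly $Q$-homogeneous with respect to $\omega_2$ (in the sense below). Then \[ \operatorname{Lift}(F)\cup\operatorname{Lift}(G)\cup H_Q \] is a pseudo-Gröbner basis of $I\times_Q J$ with respect to the weight $\omega^TB_Q$, where $\omega=(\omega_1,\omega_2)$ and $B_Q\in\mathbb{Z}^{(r+s)\times\#Q}$ is the matrix of exponent vectors of $\phi_Q$.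
   Context: $\phi_Q:\mathbb{K}[z_{jk}:(j,k)\in Q]\to\mathbb{K}[x,y]$ is the homomorphism $z_{jk}\mapsto x_jy_k$, and $I_Q=\ker\phi_Q$. The quasi-independence gluing is $I\times_QJ:=\phi_Q^{-1}(I+J)$. $G_Q$ is the bipartite graph on vertex sets $[r]$ and $[s]$ (disjoint copies) with edge set $Q$. $H_Q$ is the set of binomials $\prod_{i=1}^\ell z_{j_ik_i}-\prod_{i=1}^\ell z_{j_{i+1}k_i}$ (indices mod $\ell$), one for each induced cycle $j_1-k_1-j_2-k_2-\cdots-j_\ell-k_\ell-j_1$ of $G_Q$. For a weight $\omega$, $\mathrm{in}_\omega(f)$ is the sum of terms of $f$ of maximal $\omega$-weight, and a finite set $P\subseteq K$ is a pseudo-Gröbner basis of an ideal $K$ with respect to $\omega$ if $\langle \mathrm{in}_\omega(P)\rangle=\mathrm{in}_\omega(K)$ (initial forms need not be monomials). Weak $Q$-homogeneity: a polynomial $f\in\mathbb{K}[x]$ homogeneous in total degree $d$ whose $\omega$-initial form is (a scalar multiple of) the monomial $x_{j_1}\cdots x_{j_d}$ is weakly $Q$-homogeneous with respect to $\omega$ if for every monomial $x_{j'_1}\cdots x_{j'_d}$ of $f$ there is a permutation $\sigma$ of $[d]$ with $\{(k_1,\dots,k_d)\in[s]^d:(j_\ell,k_\ell)\in Q\ \forall\ell\}\subseteq\{(k_1,\dots,k_d)\in[s]^d:(j'_{\sigma(\ell)},k_\ell)\in Q\ \forall\ell\}$. For polynomials in $\mathbb{K}[y]$ the definition is the same with the roles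 of the two coordinates of $Q$ swapped. Lifts: write a weakly $Q$-homogeneous $f=\sum_\ell c_\ell x_{j_{\ell,1}}\cdots x_{j_{\ell,d}}$ with leading monomial $x_{j_{*,1}}\cdots x_{j_{*,d}}$, each monomial's factors being ordered (by such a permutation) so that $(j_{*,i},k_i)\in Q$ for all $i$ implies $(j_{\ell,i},k_i)\in Q$ for all $i,\ell$. For $k=(k_1,\dots,k_d)\in[s]^d$ with $(j_{*,i},k_i)\in Q$ for all $i$, the lift is $f_k=\sum_\ell c_\ell z_{j_{\ell,1}k_1}\cdots z_{j_{\ell,d}k_d}$, and $\operatorname{Lift}(f)$ is the set of all such $f_k$; $\operatorname{Lift}(F)=\bigcup_{f\in F}\operatorname{Lift}(f)$. Lifts of elements of $\mathbb{K}[y]$ are defined symmetrically (lifting by first indices $j$). *)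

theory Defs
  imports Complex_Main "HOL-Library.Poly_Mapping"
begin

type_synonym ('v, 'k) mpoly = "('v \<Rightarrow>\<^sub>0 nat) \<Rightarrow>\<^sub>0 'k"

definition polys_in :: "'v set \<Rightarrow> ('v, 'k::zero) mpoly set" where
  "polys_in V = {p. \<forall>m\<in>Poly_Mapping.keys p. Poly_Mapping.keys m \<subseteq> V}"

definition is_ideal_in :: "('v, 'k::comm_ring_1) mpoly set \<Rightarrow> ('v, 'k) mpoly set \<Rightarrow> bool" where
  "is_ideal_in R I \<longleftrightarrow> I \<subseteq> R \<and> 0 \<in> I \<and> (\<forall>f\<in>I. \<forall>g\<in>I. f + g \<in> I)
     \<and> (\<forall>h\<in>R. \<forall>f\<in>I. h * f \<in> I)"

definition ideal_gen :: "('v, 'k::comm_ring_1) mpoly set \<Rightarrow> ('v, 'k) mpoly set \<Rightarrow> ('v, 'k) mpoly set" where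
  "ideal_gen R S = \<Inter>{K. is_ideal_in R K \<and> S \<subseteq> K}"

definition mdeg :: "('v \<Rightarrow>\<^sub>0 nat) \<Rightarrow> nat" where
  "mdeg m = (\<Sum>v\<in>Poly_Mapping.keys m. Poly_Mapping.lookup m v)"

definition hcomp :: "nat \<Rightarrow> ('v, 'k::comm_monoid_add) mpoly \<Rightarrow> ('v, 'k) mpoly" where
  "hcomp d f = (\<Sum>m\<in>{m\<in>Poly_Mapping.keys f. mdeg m = d}. Poly_Mapping.single m (Poly_Mapping.lookup f m))"

definition homog_ideal :: "('v, 'k::comm_monoid_add) mpoly set \<Rightarrow> bool" where
  "homog_ideal I \<longleftrightarrow> (\<forall>f\<in>I. \<forall>d. hcomp d f \<in> I)"

definition wdeg :: "('v \<Rightarrow> real) \<Rightarrow> ('v \<Rightarrow>\<^sub>0 nat) \<Rightarrow> real" where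
  "wdeg w m = (\<Sum>v\<in>Poly_Mapping.keys m. real (Poly_Mapping.lookup m v) * w v)"

definition init :: "('v \<Rightarrow> real) \<Rightarrow> ('v, 'k::comm_monoid_add) mpoly \<Rightarrow> ('v, 'k) mpoly" where
  "init w f = (\<Sum>m\<in>{m\<in>Poly_Mapping.keys f. wdeg w m = Max (wdeg w ` Poly_Mapping.keys f)}. Poly_Mapping.single m (Poly_Mapping.lookup f m))"

definition pseudo_GB :: "('v, 'k::comm_ring_1) mpoly set \<Rightarrow> ('v \<Rightarrow> real) \<Rightarrow> ('v, 'k) mpoly set
     \<Rightarrow> ('v, 'k) mpoly set \<Rightarrow> bool" where
  "pseudo_GB R w P K \<longleftrightarrow> finite P \<and> P \<subseteq> K \<and> ideal_gen R (init w ` P) = ideal_gen R (init w ` K)"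

text \<open>Groebner basis w.r.t. a weight (the same condition; for the F, G
  considered here all initial forms are monomials).\<close>
definition groebner_basis :: "('v, 'k::comm_ring_1) mpoly set \<Rightarrow> ('v \<Rightarrow> real) \<Rightarrow> ('v, 'k) mpoly set
     \<Rightarrow> ('v, 'k) mpoly set \<Rightarrow> bool" where
  "groebner_basis R w P K \<longleftrightarrow> finite P \<and> P \<subseteq> K \<and> ideal_gen R (init w ` P) = ideal_gen R (init w ` K)"

definition mon_of_list :: "'v list \<Rightarrow> ('v \<Rightarrow>\<^sub>0 nat)" where
  "mon_of_list js = (\<Sum>i<length js. Poly_Mapping.single (js ! i) 1)"

definition lead_mon :: "(nat \<Rightarrow> real) \<Rightarrow> (nat, 'k::comm_monoid_add) mpoly \<Rightarrow> (nat \<Rightarrow>\<^sub>0 nat)" where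
  "lead_mon w f = (THE L. \<exists>c. c \<noteq> 0 \<and> init w f = Poly_Mapping.single L c)"

text \<open>An ordering o of the factors of every monomial of f witnessing weak Q-homogeneity:
  with the leading monomial ordered as ord L, every compatible index tuple ks for ord L is
  compatible with ord m.  Q' = Q for polynomials in x, Q' = converse Q for polynomials in y.\<close>
definition valid_order :: "(nat \<times> nat) set \<Rightarrow> (nat \<Rightarrow> real) \<Rightarrow> (nat, 'k::comm_monoid_add) mpoly
     \<Rightarrow> ((nat \<Rightarrow>\<^sub>0 nat) \<Rightarrow> nat list) \<Rightarrow> bool" where
  "valid_order Q' w f ord \<longleftrightarrow> (let L = lead_mon w f in
     \<forall>m\<in>Poly_Mapping.keys f. mon_of_list (ord m) = m \<and>
       (\<forall>ks. length ks = length (ord L) \<longrightarrow> (\<forall>i<length ks. (ord L ! i, ks ! i) \<in> Q')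
              \<longrightarrow> (\<forall>i<length ks. (ord m ! i, ks ! i) \<in> Q')))"

definition weakly_Q_hom :: "(nat \<times> nat) set \<Rightarrow> (nat \<Rightarrow> real) \<Rightarrow> (nat, 'k::comm_monoid_add) mpoly \<Rightarrow> bool" where
  "weakly_Q_hom Q' w f \<longleftrightarrow> (\<exists>d. \<forall>m\<in>Poly_Mapping.keys f. mdeg m = d)
     \<and> (\<exists>L c. c \<noteq> 0 \<and> init w f = Poly_Mapping.single L c)
     \<and> (\<exists>ord. valid_order Q' w f ord)"

text \<open>Lift f_ks of f with respect to the ordering o; pair builds the z-variable index
  (Pair for x-polynomials, swapped pair for y-polynomials).\<close>
definition lift :: "(nat \<Rightarrow> nat \<Rightarrow> nat \<times> nat) \<Rightarrow> ((nat \<Rightarrow>\<^sub>0 nat) \<Rightarrow> nat list) \<Rightarrow> nat list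
     \<Rightarrow> (nat, 'k::comm_monoid_add) mpoly \<Rightarrow> (nat \<times> nat, 'k) mpoly" where
  "lift pair ord ks f = (\<Sum>m\<in>Poly_Mapping.keys f.
     Poly_Mapping.single (\<Sum>i<length ks. Poly_Mapping.single (pair (ord m ! i) (ks ! i)) 1) (Poly_Mapping.lookup f m))"

definition Lifts :: "(nat \<Rightarrow> nat \<Rightarrow> nat \<times> nat) \<Rightarrow> (nat \<times> nat) set \<Rightarrow> (nat \<Rightarrow> real)
     \<Rightarrow> ((nat \<Rightarrow>\<^sub>0 nat) \<Rightarrow> nat list) \<Rightarrow> (nat, 'k::comm_monoid_add) mpoly \<Rightarrow> (nat \<times> nat, 'k) mpoly set" where
  "Lifts pair Q' w ord f = {lift pair ord ks f | ks. length ks = length (ord (lead_mon w f))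
      \<and> (\<forall>i<length ks. (ord (lead_mon w f) ! i, ks ! i) \<in> Q')}"

text \<open>Induced cycles j_1-k_1-...-j_l-k_l-j_1 of the bipartite graph G_Q.\<close>
definition induced_cycle :: "(nat \<times> nat) set \<Rightarrow> nat list \<Rightarrow> nat list \<Rightarrow> bool" where
  "induced_cycle Q js ks \<longleftrightarrow> (let l = length js in
     length ks = l \<and> l \<ge> 2 \<and> distinct js \<and> distinct ks
     \<and> (\<forall>i<l. (js ! i, ks ! i) \<in> Q \<and> (js ! ((i + 1) mod l), ks ! i) \<in> Q)
     \<and> (\<forall>a<l. \<forall>b<l. (js ! a, ks ! b) \<in> Q \<longrightarrow> a = b \<or> a = (b + 1) mod l))"

definition cycle_binomial :: "nat list \<Rightarrow> nat list \<Rightarrow> (nat \<times> nat, 'k::comm_ring_1) mpoly" where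
  "cycle_binomial js ks = (let l = length js in
     Poly_Mapping.single (\<Sum>i<l. Poly_Mapping.single (js ! i, ks ! i) 1) 1
     - Poly_Mapping.single (\<Sum>i<l. Poly_Mapping.single (js ! ((i + 1) mod l), ks ! i) 1) 1)"

definition H_Q :: "(nat \<times> nat) set \<Rightarrow> (nat \<times> nat, 'k::comm_ring_1) mpoly set" where
  "H_Q Q = {cycle_binomial js ks | js ks. induced_cycle Q js ks}"

text \<open>phi_Q : z_jk \<mapsto> x_j y_k, with x_j = Inl j and y_k = Inr k.\<close>
definition mon_phi :: "(nat \<times> nat \<Rightarrow>\<^sub>0 nat) \<Rightarrow> (nat + nat \<Rightarrow>\<^sub>0 nat)" where
  "mon_phi m = (\<Sum>p\<in>Poly_Mapping.keys m. Poly_Mapping.single (Inl (fst p)) (Poly_Mapping.lookup m p)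
                             + Poly_Mapping.single (Inr (snd p)) (Poly_Mapping.lookup m p))"

definition phi :: "(nat \<times> nat, 'k::comm_monoid_add) mpoly \<Rightarrow> (nat + nat, 'k) mpoly" where
  "phi f = (\<Sum>m\<in>Poly_Mapping.keys f. Poly_Mapping.single (mon_phi m) (Poly_Mapping.lookup f m))"

definition ren_mon :: "('a \<Rightarrow> 'b) \<Rightarrow> ('a \<Rightarrow>\<^sub>0 nat) \<Rightarrow> ('b \<Rightarrow>\<^sub>0 nat)" where
  "ren_mon g m = (\<Sum>v\<in>Poly_Mapping.keys m. Poly_Mapping.single (g v) (Poly_Mapping.lookup m v))"

definition ren_poly :: "('a \<Rightarrow> 'b) \<Rightarrow> ('a, 'k::comm_monoid_add) mpoly \<Rightarrow> ('b, 'k) mpoly" where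
  "ren_poly g p = (\<Sum>m\<in>Poly_Mapping.keys p. Poly_Mapping.single (ren_mon g m) (Poly_Mapping.lookup p m))"

text \<open>Quasi-independence gluing I \<times>_Q J = phi_Q^{-1}(I + J) inside K[z_jk : (j,k) \<in> Q].\<close>
definition glue :: "nat \<Rightarrow> nat \<Rightarrow> (nat \<times> nat) set \<Rightarrow> (nat, 'k::comm_ring_1) mpoly set
     \<Rightarrow> (nat, 'k) mpoly set \<Rightarrow> (nat \<times> nat, 'k) mpoly set" where
  "glue r s Q I J = {f \<in> polys_in Q. phi f \<in>
     ideal_gen (polys_in (Inl ` {1..r} \<union> Inr ` {1..s})) (ren_poly Inl ` I \<union> ren_poly Inr ` J)}"

end

theory Submission
  imports Defs "HOL-Library.FuncSet"
begin


abbreviation LK where "LK \<equiv> Poly_Mapping.lookup"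
abbreviation KS where "KS \<equiv> Poly_Mapping.keys"
abbreviation SG where "SG \<equiv> Poly_Mapping.single"

definition GL :: "('a \<Rightarrow> 'b \<Rightarrow> 'c::comm_monoid_add) \<Rightarrow> ('a \<Rightarrow>\<^sub>0 'b::zero) \<Rightarrow> 'c" where
  "GL F p = (\<Sum>v\<in>KS p. F v (LK p v))"

definition addhom :: "('a \<Rightarrow> 'b::monoid_add \<Rightarrow> 'c::comm_monoid_add) \<Rightarrow> bool" where
  "addhom F \<longleftrightarrow> (\<forall>v. F v 0 = 0) \<and> (\<forall>v a b. F v (a + b) = F v a + F v b)"

lemma GL_superset:
  assumes "finite A" "KS p \<subseteq> A" "\<And>v. F v 0 = 0"
  shows "GL F p = (\<Sum>v\<in>A. F v (LK p v))"
  unfolding GL_def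
  by (rule sum.mono_neutral_left) (use assms in \<open>auto simp: in_keys_iff\<close>)

lemma GL_add:
  fixes p q :: "'a \<Rightarrow>\<^sub>0 'b::comm_monoid_add"
  assumes "addhom F" shows "GL F (p + q) = GL F p + GL F q"
  unfolding GL_def
  by (rule setsum_keys_plus_distrib) (use assms in \<open>auto simp: addhom_def\<close>)

lemma GL_zero [simp]: "GL F 0 = 0"
  by (simp add: GL_def)

lemma GL_single:
  assumes "F v 0 = 0" shows "GL F (SG v c) = F v c"
  using assms by (simp add: GL_def)

lemma GL_sum:
  fixes g :: "'i \<Rightarrow> 'a \<Rightarrow>\<^sub>0 'b::comm_monoid_add"
  assumes "addhom F"
  shows "GL F (\<Sum>i\<in>A. g i) = (\<Sum>i\<in>A. GL F (g i))"
proof (cases "finite A")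
  case True
  then show ?thesis by (induction A rule: finite_induct) (auto simp: GL_add assms)
qed simp

lemma GL_uminus:
  fixes p :: "'a \<Rightarrow>\<^sub>0 'b::ab_group_add" and F :: "'a \<Rightarrow> 'b \<Rightarrow> 'c::ab_group_add"
  assumes "addhom F" shows "GL F (- p) = - GL F p"
proof -
  have "GL F (- p) + GL F p = GL F (-p + p)" using GL_add[OF assms] by metis
  also have "\<dots> = 0" by simp
  finally show ?thesis by (simp add: eq_neg_iff_add_eq_0)
qed

lemma GL_diff:
  fixes p q :: "'a \<Rightarrow>\<^sub>0 'b::ab_group_add" and F :: "'a \<Rightarrow> 'b \<Rightarrow> 'c::ab_group_add"
  assumes "addhom F" shows "GL F (p - q) = GL F p - GL F q"
  using GL_add[OF assms, of p "-q"] GL_uminus[OF assms, of q] by simp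

lemma addhom_single: "addhom (\<lambda>v. SG (g v))"
  by (simp add: addhom_def single_add)

lemma poly_expand: "(\<Sum>m\<in>KS p. SG m (LK p m)) = p"
proof (rule poly_mapping_eqI)
  fix k
  show "LK (\<Sum>m\<in>KS p. SG m (LK p m)) k = LK p k"
    by (cases "k \<in> KS p") (auto simp: lookup_sum lookup_single when_def in_keys_iff)
qed

lemma GL_id: "GL SG p = p"
  using poly_expand by (simp add: GL_def)

lemma lookup_map_key:
  assumes "inj f" shows "LK (Poly_Mapping.map_key f p) x = LK p (f x)"
  using assms by (simp add: map_key.rep_eq)

lemma polys_inI: "(\<And>m. m \<in> KS p \<Longrightarrow> KS m \<subseteq> V) \<Longrightarrow> p \<in> polys_in V"
  by (auto simp: polys_in_def)

lemma polys_inD: "p \<in> polys_in V \<Longrightarrow> m \<in> KS p \<Longrightarrow> KS m \<subseteq> V"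
  by (auto simp: polys_in_def)

lemma keys_add_mon: "KS ((a::'v \<Rightarrow>\<^sub>0 nat) + b) = KS a \<union> KS b"
  by (auto simp: in_keys_iff lookup_add)

lemma polys_in_zero [simp]: "0 \<in> polys_in V"
  by (rule polys_inI) simp

lemma polys_in_add: assumes "p \<in> polys_in V" "q \<in> polys_in V" shows "p + q \<in> polys_in V"
proof (rule polys_inI)
  fix m assume "m \<in> KS (p + q)"
  then show "KS m \<subseteq> V" using assms keys_add[of p q] polys_inD by blast
qed

lemma polys_in_uminus: "p \<in> polys_in V \<Longrightarrow> (- p :: ('v,'k::ab_group_add) mpoly) \<in> polys_in V"
  by (rule polys_inI) (simp add: polys_inD)

lemma polys_in_diff: "p \<in> polys_in V \<Longrightarrow> q \<in> polys_in V \<Longrightarrow> (p - q :: ('v,'k::ab_group_add) mpoly) \<in> polys_in V"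
  using polys_in_add[OF _ polys_in_uminus] by (metis diff_conv_add_uminus)

lemma polys_in_single: "KS m \<subseteq> V \<Longrightarrow> SG m c \<in> polys_in V"
  by (rule polys_inI) (simp split: if_splits)

lemma polys_in_mult:
  assumes "p \<in> polys_in V" "q \<in> polys_in V"
  shows "(p * q :: ('v,'k::comm_semiring_0) mpoly) \<in> polys_in V"
proof (rule polys_inI)
  fix m assume "m \<in> KS (p * q)"
  then obtain a b where "m = a + b" "a \<in> KS p" "b \<in> KS q" using keys_mult by blast
  then show "KS m \<subseteq> V" using assms polys_inD[of p V a] polys_inD[of q V b] by (simp add: keys_add_mon)
qed

lemma polys_in_sum: "(\<And>i. i \<in> A \<Longrightarrow> g i \<in> polys_in V) \<Longrightarrow> (\<Sum>i\<in>A. g i) \<in> polys_in V"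
  by (induction A rule: infinite_finite_induct) (simp_all add: polys_in_add)

lemma polys_in_one [simp]: "(1 :: ('v,'k::{zero_neq_one}) mpoly) \<in> polys_in V"
  by (rule polys_inI) simp

lemma ideal_sub: "is_ideal_in R I \<Longrightarrow> I \<subseteq> R" by (simp add: is_ideal_in_def)
lemma ideal_zero: "is_ideal_in R I \<Longrightarrow> 0 \<in> I" by (simp add: is_ideal_in_def)
lemma ideal_add: "is_ideal_in R I \<Longrightarrow> f \<in> I \<Longrightarrow> g \<in> I \<Longrightarrow> f + g \<in> I" by (simp add: is_ideal_in_def)
lemma ideal_mult: "is_ideal_in R I \<Longrightarrow> h \<in> R \<Longrightarrow> f \<in> I \<Longrightarrow> h * f \<in> I" by (simp add: is_ideal_in_def)

context
  fixes V :: "'v set"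
begin

lemma ideal_uminus:
  assumes "is_ideal_in (polys_in V) I" "f \<in> I"
  shows "(- f :: ('v,'k::comm_ring_1) mpoly) \<in> I"
proof -
  have "(-1::('v,'k) mpoly) \<in> polys_in V" using polys_in_uminus[OF polys_in_one] by blast
  from ideal_mult[OF assms(1) this assms(2)] show ?thesis by simp
qed

lemma ideal_diff:
  assumes "is_ideal_in (polys_in V) I" "f \<in> I" "g \<in> I"
  shows "(f - g :: ('v,'k::comm_ring_1) mpoly) \<in> I"
  using ideal_add[OF assms(1) assms(2) ideal_uminus[OF assms(1) assms(3)]] by simp

lemma ideal_sum:
  assumes "is_ideal_in (polys_in V) I" "\<And>i. i \<in> A \<Longrightarrow> g i \<in> I"
  shows "(\<Sum>i\<in>A. g i :: ('v,'k::comm_ring_1) mpoly) \<in> I"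
  using assms(2) by (induction A rule: infinite_finite_induct) (auto intro: ideal_add[OF assms(1)] ideal_zero[OF assms(1)])

lemma ideal_gen_mem: "x \<in> ideal_gen R S \<longleftrightarrow> (\<forall>K. is_ideal_in R K \<and> S \<subseteq> K \<longrightarrow> x \<in> K)"
  by (auto simp: ideal_gen_def)

lemma ideal_gen_ideal:
  assumes "S \<subseteq> polys_in V"
  shows "is_ideal_in (polys_in V) (ideal_gen (polys_in V) (S :: ('v,'k::comm_ring_1) mpoly set))"
proof -
  have ne: "is_ideal_in (polys_in V) (polys_in V)"
    unfolding is_ideal_in_def by (simp add: polys_in_add polys_in_mult)
  show ?thesis unfolding is_ideal_in_def
  proof (intro conjI ballI)
    show "ideal_gen (polys_in V) S \<subseteq> polys_in V" using ne assms by (auto simp: ideal_gen_mem)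
    show "0 \<in> ideal_gen (polys_in V) S" by (auto simp: ideal_gen_mem dest: ideal_zero)
    fix f g :: "('v,'k) mpoly" assume "f \<in> ideal_gen (polys_in V) S" "g \<in> ideal_gen (polys_in V) S"
    then show "f + g \<in> ideal_gen (polys_in V) S" by (auto simp: ideal_gen_mem dest: ideal_add)
  next
    fix h f :: "('v,'k) mpoly" assume "h \<in> polys_in V" "f \<in> ideal_gen (polys_in V) S"
    then show "h * f \<in> ideal_gen (polys_in V) S" by (auto simp: ideal_gen_mem dest: ideal_mult)
  qed
qed

end

lemma ideal_gen_sub: "S \<subseteq> ideal_gen R S"
  by (auto simp: ideal_gen_def)

lemma ideal_gen_least: "is_ideal_in R K \<Longrightarrow> S \<subseteq> K \<Longrightarrow> ideal_gen R S \<subseteq> K"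
  by (auto simp: ideal_gen_def)

lemma ideal_gen_mono:
  assumes "S \<subseteq> T" "T \<subseteq> polys_in V"
  shows "ideal_gen (polys_in V) S \<subseteq> ideal_gen (polys_in V) (T :: ('v,'k::comm_ring_1) mpoly set)"
  by (rule ideal_gen_least[OF ideal_gen_ideal[OF assms(2)]]) (use assms ideal_gen_sub in blast)


lemma addfun_sum:
  assumes "\<And>a b. f (a + b) = f a + f b" "f 0 = 0"
  shows "f (\<Sum>i\<in>A. g i) = (\<Sum>i\<in>A. f (g i))"
  by (induction A rule: infinite_finite_induct) (simp_all add: assms)

lemma addfun_expand:
  fixes f :: "('a \<Rightarrow>\<^sub>0 'b::comm_monoid_add) \<Rightarrow> 'c::comm_monoid_add"
  assumes "\<And>a b. f (a + b) = f a + f b" "f 0 = 0"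
  shows "f m = (\<Sum>v\<in>KS m. f (SG v (LK m v)))"
  using addfun_sum[of f, OF assms, of "\<lambda>v. SG v (LK m v)" "KS m"] poly_expand[of m] by simp

lemma addfun_eqI:
  fixes f g :: "('a \<Rightarrow>\<^sub>0 'b::comm_monoid_add) \<Rightarrow> 'c::comm_monoid_add"
  assumes "\<And>a b. f (a + b) = f a + f b" "f 0 = 0"
    "\<And>a b. g (a + b) = g a + g b" "g 0 = 0"
    "\<And>v n. f (SG v n) = g (SG v n)"
  shows "f m = g m"
  using addfun_expand[of f m] addfun_expand[of g m] assms by simp

lemma mon_phi_GL: "mon_phi m = GL (\<lambda>p n. SG (Inl (fst p)) n + SG (Inr (snd p)) n) m"
  by (simp add: mon_phi_def GL_def)

lemma addhom_mon_phi: "addhom (\<lambda>p n. SG (Inl (fst p)) n + SG (Inr (snd p)) (n::nat))"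
  by (simp add: addhom_def single_add ac_simps)

lemma mon_phi_add: "mon_phi (a + b) = mon_phi a + mon_phi b"
  unfolding mon_phi_GL by (rule GL_add[OF addhom_mon_phi])

lemma mon_phi_zero [simp]: "mon_phi 0 = 0"
  by (simp add: mon_phi_def)

lemma mon_phi_single: "mon_phi (SG p n) = SG (Inl (fst p)) n + SG (Inr (snd p)) n"
  unfolding mon_phi_GL by (rule GL_single) simp

lemma ren_mon_GL: "ren_mon g m = GL (\<lambda>v n. SG (g v) n) m"
  by (simp add: ren_mon_def GL_def)

lemma ren_mon_add: "ren_mon g (a + b) = ren_mon g a + ren_mon g b"
  unfolding ren_mon_GL by (rule GL_add) (simp add: addhom_def single_add)

lemma ren_mon_zero [simp]: "ren_mon g 0 = 0"
  by (simp add: ren_mon_def)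

lemma ren_mon_single: "ren_mon g (SG v n) = SG (g v) n"
  unfolding ren_mon_GL by (rule GL_single) simp

lemma mdeg_GL: "mdeg m = GL (\<lambda>v n. n) m"
  by (simp add: mdeg_def GL_def)

lemma mdeg_add: "mdeg (a + b) = mdeg a + mdeg b"
  unfolding mdeg_GL by (rule GL_add) (simp add: addhom_def)

lemma mdeg_zero [simp]: "mdeg 0 = 0"
  by (simp add: mdeg_def)

lemma mdeg_single [simp]: "mdeg (SG v n) = n"
  unfolding mdeg_GL by (rule GL_single) simp

lemma mdeg_eq_0: "mdeg m = 0 \<longleftrightarrow> m = 0"
proof
  assume "mdeg m = 0"
  then have "\<forall>v\<in>KS m. LK m v = 0" unfolding mdeg_def by simp
  then show "m = 0" by (metis all_not_in_conv in_keys_iff keys_eq_empty)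
qed simp

lemma wdeg_GL: "wdeg w m = GL (\<lambda>v n. real n * w v) m"
  by (simp add: wdeg_def GL_def)

lemma wdeg_add: "wdeg w (a + b) = wdeg w a + wdeg w b"
  unfolding wdeg_GL by (rule GL_add) (simp add: addhom_def algebra_simps)

lemma wdeg_zero [simp]: "wdeg w 0 = 0"
  by (simp add: wdeg_def)

lemma wdeg_single [simp]: "wdeg w (SG v n) = real n * w v"
  unfolding wdeg_GL by (rule GL_single) simp

lemma mon_of_list_Nil [simp]: "mon_of_list [] = 0"
  by (simp add: mon_of_list_def)

lemma mon_of_list_Cons: "mon_of_list (x # xs) = SG x 1 + mon_of_list xs"
  unfolding mon_of_list_def length_Cons sum.lessThan_Suc_shift by simp

lemma mdeg_mon_of_list [simp]: "mdeg (mon_of_list js) = length js"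
  by (induction js) (simp_all add: mon_of_list_Cons mdeg_add)

lemma sum_list_idx_Cons:
  "(\<Sum>i<length (x # xs). f ((x # xs) ! i)) = f x + (\<Sum>i<length xs. f (xs ! i))"
  unfolding length_Cons sum.lessThan_Suc_shift by simp

lemma addfun_mon_of_list:
  assumes "\<And>a b. f (a + b) = f a + f b" "f 0 = 0"
  shows "f (mon_of_list js) = (\<Sum>i<length js. f (SG (js ! i) 1))"
  unfolding mon_of_list_def by (rule addfun_sum[OF assms])

lemma phi_GL: "phi f = GL (\<lambda>m. SG (mon_phi m)) f"
  by (simp add: phi_def GL_def)

lemma phi_add: "phi (p + q) = phi p + phi q"
  unfolding phi_GL by (rule GL_add[OF addhom_single])

lemma phi_zero [simp]: "phi 0 = 0"
  by (simp add: phi_def)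

lemma phi_single: "phi (SG m c) = SG (mon_phi m) c"
  unfolding phi_GL by (rule GL_single) simp

lemma phi_uminus: "phi (- p :: (nat \<times> nat, 'k::ab_group_add) mpoly) = - phi p"
  unfolding phi_GL by (rule GL_uminus[OF addhom_single])

lemma phi_diff: "phi (p - q :: (nat \<times> nat, 'k::ab_group_add) mpoly) = phi p - phi q"
  unfolding phi_GL by (rule GL_diff[OF addhom_single])

lemma phi_sum: "phi (\<Sum>i\<in>A. g i) = (\<Sum>i\<in>A. phi (g i))"
  by (rule addfun_sum) (simp_all add: phi_add)

lemma ren_poly_GL: "ren_poly g f = GL (\<lambda>m. SG (ren_mon g m)) f"
  by (simp add: ren_poly_def GL_def)

lemma ren_poly_add: "ren_poly g (p + q) = ren_poly g p + ren_poly g q"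
  unfolding ren_poly_GL by (rule GL_add[OF addhom_single])

lemma ren_poly_zero [simp]: "ren_poly g 0 = 0"
  by (simp add: ren_poly_def)

lemma ren_poly_single: "ren_poly g (SG m c) = SG (ren_mon g m) c"
  unfolding ren_poly_GL by (rule GL_single) simp

lemma ren_poly_sum: "ren_poly g (\<Sum>i\<in>A. h i) = (\<Sum>i\<in>A. ren_poly g (h i))"
  by (rule addfun_sum) (simp_all add: ren_poly_add)

lemma single_mult_expand:
  "SG a c * p = (\<Sum>m\<in>KS p. SG (a + m) (c * LK p m))"
proof -
  have "SG a c * p = SG a c * (\<Sum>m\<in>KS p. SG m (LK p m))" by (simp add: poly_expand)
  also have "\<dots> = (\<Sum>m\<in>KS p. SG a c * SG m (LK p m))" by (simp add: sum_distrib_left)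
  also have "\<dots> = (\<Sum>m\<in>KS p. SG (a + m) (c * LK p m))" by (simp add: mult_single)
  finally show ?thesis .
qed

lemma lookup_single_mult:
  fixes a :: "'v \<Rightarrow>\<^sub>0 nat" and p :: "('v,'k::comm_semiring_1) mpoly"
  shows "LK (SG a c * p) (a + m) = c * LK p m"
proof -
  have "LK (SG a c * p) (a + m) = (\<Sum>m'\<in>KS p. (c * LK p m' when a + m' = a + m))"
    by (simp add: single_mult_expand lookup_sum lookup_single)
  also have "\<dots> = (\<Sum>m'\<in>KS p. (c * LK p m' when m' = m))"
    by (rule sum.cong) (auto simp: when_def)
  also have "\<dots> = c * LK p m"
    by (cases "m \<in> KS p") (auto simp: when_def in_keys_iff)
  finally show ?thesis .
qed

lemma keys_single_mult:
  fixes a :: "'v \<Rightarrow>\<^sub>0 nat" and p :: "('v,'k::comm_semiring_1) mpoly"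
  shows "KS (SG a c * p) \<subseteq> (\<lambda>m. a + m) ` KS p"
  using keys_mult[of "SG a c" p] by (auto split: if_splits)

lemma sum_when_eq: "finite A \<Longrightarrow> (\<Sum>x\<in>A. (g x when x = a)) = (if a \<in> A then g a else 0)"
  unfolding when_def by (rule sum.delta)

definition MW :: "('v \<Rightarrow> real) \<Rightarrow> ('v, 'k::zero) mpoly \<Rightarrow> real" where
  "MW w f = Max (wdeg w ` KS f)"

lemma lookup_init:
  "LK (init w f) m = (if wdeg w m = MW w f then LK f m else 0)"
proof -
  have "LK (init w f) m = (\<Sum>m'\<in>{m' \<in> KS f. wdeg w m' = MW w f}. (LK f m' when m' = m))"
    by (simp add: init_def MW_def lookup_sum lookup_single)
  also have "\<dots> = (if m \<in> {m' \<in> KS f. wdeg w m' = MW w f} then LK f m else 0)"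
    by (rule sum_when_eq) simp
  also have "\<dots> = (if wdeg w m = MW w f then LK f m else 0)"
    by (simp add: in_keys_iff)
  finally show ?thesis .
qed

lemma keys_init: "KS (init w f) = {m \<in> KS f. wdeg w m = MW w f}"
  by (rule set_eqI) (simp add: in_keys_iff lookup_init)

lemma MW_ge: "m \<in> KS f \<Longrightarrow> wdeg w m \<le> MW w f"
  unfolding MW_def by (rule Max_ge) auto

lemma MW_attained: "f \<noteq> 0 \<Longrightarrow> \<exists>m\<in>KS f. wdeg w m = MW w f"
proof -
  assume "f \<noteq> 0"
  then have "KS f \<noteq> {}" by simp
  then have "MW w f \<in> wdeg w ` KS f" unfolding MW_def by (intro Max_in) auto
  then show ?thesis by auto
qed

lemma init_nonzero: "f \<noteq> 0 \<Longrightarrow> init w f \<noteq> 0"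
proof -
  assume "f \<noteq> 0"
  then obtain m where "m \<in> KS f" "wdeg w m = MW w f" using MW_attained by blast
  then have "m \<in> KS (init w f)" by (simp add: keys_init)
  then show ?thesis by auto
qed

lemma init_zero [simp]: "init w 0 = 0"
  by (simp add: init_def)

lemma keys_init_sub: "KS (init w f) \<subseteq> KS f"
  unfolding keys_init by blast

lemma init_polys_in: "f \<in> polys_in V \<Longrightarrow> init w f \<in> polys_in V"
  using keys_init_sub polys_inD by (blast intro: polys_inI)

lemma MW_le: "f \<noteq> 0 \<Longrightarrow> (\<And>m. m \<in> KS f \<Longrightarrow> wdeg w m \<le> c) \<Longrightarrow> MW w f \<le> c"
  using MW_attained by metis

lemma init_homog:
  assumes "\<And>m. m \<in> KS f \<Longrightarrow> wdeg w m = c"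
  shows "init w f = f"
proof (cases "f = 0")
  case False
  then obtain m where "m \<in> KS f" "wdeg w m = MW w f" using MW_attained by blast
  then have "MW w f = c" using assms by simp
  show ?thesis
  proof (rule poly_mapping_eqI)
    fix k show "LK (init w f) k = LK f k"
      using assms[of k] \<open>MW w f = c\<close> by (cases "k \<in> KS f") (simp_all add: lookup_init in_keys_iff)
  qed
qed simp

lemma init_single: "init w (SG m c) = SG m c"
  by (rule init_homog[of _ _ "wdeg w m"]) (metis empty_iff insert_iff keys_single)


definition divs :: "('v \<Rightarrow>\<^sub>0 nat) \<Rightarrow> ('v \<Rightarrow>\<^sub>0 nat) \<Rightarrow> bool" where
  "divs L m \<longleftrightarrow> (\<exists>e. m = L + e)"

definition MI :: "'v set \<Rightarrow> ('v \<Rightarrow>\<^sub>0 nat) set \<Rightarrow> ('v, 'k::comm_ring_1) mpoly set" where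
  "MI V D = {p \<in> polys_in V. \<forall>m\<in>KS p. \<exists>L\<in>D. divs L m}"

lemma MI_mem: "p \<in> MI V D \<longleftrightarrow> p \<in> polys_in V \<and> (\<forall>m\<in>KS p. \<exists>L\<in>D. divs L m)"
  by (simp add: MI_def)

lemma MI_ideal: "is_ideal_in (polys_in V) (MI V D :: ('v,'k::comm_ring_1) mpoly set)"
  unfolding is_ideal_in_def
proof (intro conjI ballI)
  show "MI V D \<subseteq> (polys_in V :: ('v,'k) mpoly set)" unfolding MI_def by (rule Collect_subset)
  show "0 \<in> (MI V D :: ('v,'k) mpoly set)" unfolding MI_mem by simp
next
  fix f g :: "('v,'k) mpoly" assume f: "f \<in> MI V D" and g: "g \<in> MI V D"
  show "f + g \<in> MI V D" unfolding MI_mem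
  proof (intro conjI ballI)
    show "f + g \<in> polys_in V" using f g by (simp add: MI_mem polys_in_add)
    fix m assume "m \<in> KS (f + g)"
    then have "m \<in> KS f \<or> m \<in> KS g" using keys_add[of f g] by blast
    then show "\<exists>L\<in>D. divs L m" using f g unfolding MI_mem by blast
  qed
next
  fix h f :: "('v,'k) mpoly" assume h: "h \<in> polys_in V" and f: "f \<in> MI V D"
  show "h * f \<in> MI V D" unfolding MI_mem
  proof (intro conjI ballI)
    show "h * f \<in> polys_in V" using f h by (simp add: MI_mem polys_in_mult)
    fix m assume "m \<in> KS (h * f)"
    then obtain a b where ab: "m = a + b" "b \<in> KS f" using keys_mult[of h f] by blast
    then obtain L where L: "L \<in> D" "divs L b" using f unfolding MI_mem by blast
    then obtain e where "b = L + e" unfolding divs_def by blast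
    then have "m = L + (a + e)" using ab by (simp add: ac_simps)
    then show "\<exists>L\<in>D. divs L m" using L(1) unfolding divs_def by blast
  qed
qed

lemma lookup_diff_keys: "m \<in> KS (f - g) \<Longrightarrow> m \<in> KS f \<or> m \<in> KS (g :: ('v,'k::ab_group_add) mpoly)"
  using keys_diff[of f g] by blast

lemma lookup_scal: "LK (SG 0 c * p) m = c * LK (p :: ('v,'k::comm_semiring_1) mpoly) m"
  using lookup_single_mult[of 0 c p m] by simp

lemma keys_scal: "KS (SG 0 c * p) \<subseteq> KS (p :: ('v,'k::comm_semiring_1) mpoly)"
proof
  fix m assume "m \<in> KS (SG 0 c * p)"
  then have "c * LK p m \<noteq> 0" by (simp add: in_keys_iff lookup_scal)
  then show "m \<in> KS p" by (metis in_keys_iff mult_zero_right)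
qed

lemma scal_polys_in: "SG 0 c \<in> polys_in V"
  by (rule polys_in_single) simp

lemma lookup_le_mdeg: "LK m v \<le> mdeg m"
proof (cases "v \<in> KS m")
  case True
  then show ?thesis unfolding mdeg_def by (intro member_le_sum) simp_all
next
  case False
  then show ?thesis by (simp add: in_keys_iff)
qed

lemma finite_mons:
  assumes "finite V"
  shows "finite {m :: 'v \<Rightarrow>\<^sub>0 nat. KS m \<subseteq> V \<and> mdeg m = n}"
proof -
  let ?S = "{m :: 'v \<Rightarrow>\<^sub>0 nat. KS m \<subseteq> V \<and> mdeg m = n}"
  let ?h = "\<lambda>m. restrict (LK m) V"
  have "?h ` ?S \<subseteq> V \<rightarrow>\<^sub>E {0..n}"
  proof
    fix x assume "x \<in> ?h ` ?S"
    then obtain m where m: "m \<in> ?S" "x = ?h m" by blast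
    have "\<forall>v. LK m v \<le> n" using lookup_le_mdeg m(1) by fastforce
    then show "x \<in> V \<rightarrow>\<^sub>E {0..n}" using m(2) by (simp add: PiE_iff)
  qed
  moreover have "finite (V \<rightarrow>\<^sub>E {0..n})" using assms by (intro finite_PiE) auto
  ultimately have fin: "finite (?h ` ?S)" by (rule finite_subset)
  have "inj_on ?h ?S"
  proof (rule inj_onI)
    fix a b assume a: "a \<in> ?S" and b: "b \<in> ?S" and eq: "?h a = ?h b"
    show "a = b"
    proof (rule poly_mapping_eqI)
      fix v show "LK a v = LK b v"
      proof (cases "v \<in> V")
        case True then show ?thesis using fun_cong[OF eq, of v] by simp
      next
        case False
        then have "v \<notin> KS a" "v \<notin> KS b" using a b by blast+
        then show ?thesis by (simp add: not_in_keys_iff_lookup_eq_zero)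
      qed
    qed
  qed
  then show ?thesis using fin finite_imageD by blast
qed

locale side =
  fixes V :: "nat set" and I F :: "(nat, 'k::field) mpoly set" and w :: "nat \<Rightarrow> real"
  assumes finV: "finite V"
    and ideal: "is_ideal_in (polys_in V) I"
    and gb: "groebner_basis (polys_in V) w F I"
    and hom: "\<forall>f\<in>F. \<exists>d. \<forall>m\<in>KS f. mdeg m = d"
    and lead: "\<forall>f\<in>F. \<exists>L c. c \<noteq> 0 \<and> init w f = SG L c"
begin

lemma F_sub: "F \<subseteq> I" using gb by (simp add: groebner_basis_def)
lemma I_sub: "I \<subseteq> polys_in V" using ideal by (simp add: is_ideal_in_def)
lemma F_fin: "finite F" using gb by (simp add: groebner_basis_def)

definition LMf where "LMf f = lead_mon w f"

lemma lead_props: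
  assumes "f \<in> F"
  shows "init w f = SG (LMf f) (LK f (LMf f))" "LK f (LMf f) \<noteq> 0" "LMf f \<in> KS f"
    "\<And>t. t \<in> KS f \<Longrightarrow> t \<noteq> LMf f \<Longrightarrow> wdeg w t < wdeg w (LMf f)"
proof -
  obtain L c where Lc: "c \<noteq> 0" "init w f = SG L c" using lead assms by blast
  have "LMf f = L" unfolding LMf_def lead_mon_def
  proof (rule the_equality)
    show "\<exists>c. c \<noteq> 0 \<and> init w f = SG L c" using Lc by blast
    fix L' assume "\<exists>c. c \<noteq> 0 \<and> init w f = SG L' c"
    then obtain c' where "c' \<noteq> 0" "SG L c = SG L' c'" using Lc by auto
    then show "L' = L" by (metis lookup_single_eq lookup_single_not_eq)
  qed
  have kI: "KS (init w f) = {L}" using Lc by simp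
  then have "L \<in> KS f" "wdeg w L = MW w f" using keys_init[of w f] by blast+
  have "LK f L = c" using lookup_init[of w f L] Lc \<open>wdeg w L = MW w f\<close> by simp
  show "init w f = SG (LMf f) (LK f (LMf f))" using Lc \<open>LMf f = L\<close> \<open>LK f L = c\<close> by simp
  show "LK f (LMf f) \<noteq> 0" using Lc \<open>LMf f = L\<close> \<open>LK f L = c\<close> by simp
  show "LMf f \<in> KS f" using \<open>L \<in> KS f\<close> \<open>LMf f = L\<close> by simp
  fix t assume t: "t \<in> KS f" "t \<noteq> LMf f"
  have "wdeg w t \<le> MW w f" using MW_ge[OF t(1)] .
  moreover have "wdeg w t \<noteq> MW w f"
  proof
    assume "wdeg w t = MW w f"
    then have "t \<in> KS (init w f)" using t(1) keys_init[of w f] by blast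
    then show False using kI t(2) \<open>LMf f = L\<close> by simp
  qed
  ultimately show "wdeg w t < wdeg w (LMf f)" using \<open>wdeg w L = MW w f\<close> \<open>LMf f = L\<close> by simp
qed

definition Std where "Std = {m. \<forall>f\<in>F. \<not> divs (LMf f) m}"

lemma gb_std:
  assumes "q \<in> I" "q \<noteq> 0"
  shows "\<exists>m\<in>KS q. m \<notin> Std"
proof -
  have initI: "init w ` I \<subseteq> polys_in V" using I_sub init_polys_in by blast
  have "init w q \<in> ideal_gen (polys_in V) (init w ` I)"
    using assms(1) ideal_gen_sub by blast
  also have "\<dots> = ideal_gen (polys_in V) (init w ` F)" using gb by (simp add: groebner_basis_def)
  also have "\<dots> \<subseteq> MI V (LMf ` F)"
  proof (rule ideal_gen_least[OF MI_ideal])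
    show "init w ` F \<subseteq> MI V (LMf ` F)"
    proof
      fix x assume "x \<in> init w ` F"
      then obtain f where f: "f \<in> F" "x = init w f" by blast
      then have x: "x = SG (LMf f) (LK f (LMf f))" using lead_props by simp
      have "x \<in> polys_in V" using f initI F_sub by blast
      moreover have "\<forall>m\<in>KS x. \<exists>L\<in>LMf ` F. divs L m"
        using x f by (auto simp: divs_def intro!: exI[of _ 0])
      ultimately show "x \<in> MI V (LMf ` F)" by (simp add: MI_def)
    qed
  qed
  finally have q: "init w q \<in> MI V (LMf ` F)" .
  obtain m where "m \<in> KS (init w q)" using init_nonzero[OF assms(2)] by fastforce
  then have "m \<in> KS q" "\<exists>L\<in>LMf ` F. divs L m" using q keys_init_sub by (auto simp: MI_def)
  then show ?thesis by (auto simp: Std_def)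
qed

lemma std_unique:
  assumes "q \<in> I" "KS q \<subseteq> Std"
  shows "q = 0"
  using gb_std assms by blast

definition T where "T n = {m. KS m \<subseteq> V \<and> mdeg m = n}"

lemma T_fin: "finite (T n)"
  unfolding T_def by (rule finite_mons[OF finV])

lemma reducer:
  fixes a :: 'k
  assumes f: "f \<in> F" and e: "KS e \<subseteq> V"
  defines "r \<equiv> SG e (a / LK f (LMf f)) * f"
  shows "r \<in> I" "LK r (e + LMf f) = a"
    "\<And>\<nu>. \<nu> \<in> KS r \<Longrightarrow> \<nu> \<noteq> e + LMf f \<Longrightarrow> wdeg w \<nu> < wdeg w (e + LMf f)"
    "\<And>\<nu>. \<nu> \<in> KS r \<Longrightarrow> KS \<nu> \<subseteq> V \<and> mdeg \<nu> = mdeg (e + LMf f)"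
proof -
  show "r \<in> I" unfolding r_def
    by (rule ideal_mult[OF ideal]) (use e f F_sub in \<open>auto intro: polys_in_single\<close>)
  show "LK r (e + LMf f) = a" unfolding r_def lookup_single_mult
    using lead_props(2)[OF f] by simp
  fix \<nu> assume "\<nu> \<in> KS r"
  then obtain t where t: "t \<in> KS f" "\<nu> = e + t" unfolding r_def using keys_single_mult[of e "a / LK f (LMf f)" f] by blast
  {
    assume "\<nu> \<noteq> e + LMf f"
    then have "t \<noteq> LMf f" using t by auto
    then have "wdeg w t < wdeg w (LMf f)" using lead_props(4)[OF f t(1)] by simp
    then show "wdeg w \<nu> < wdeg w (e + LMf f)" using t by (simp add: wdeg_add)
  }
  obtain d where d: "\<forall>m\<in>KS f. mdeg m = d" using hom f by blast
  have "mdeg t = mdeg (LMf f)" using d t(1) lead_props(3)[OF f] by simp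
  moreover have "KS t \<subseteq> V" using t(1) f F_sub I_sub polys_inD by blast
  ultimately show "KS \<nu> \<subseteq> V \<and> mdeg \<nu> = mdeg (e + LMf f)"
    using t e by (simp add: mdeg_add keys_add_mon)
qed

end


context side begin

definition phiM where
  "phiM n g = (if KS g - Std = {} then 0 else
     card {t\<in>T n. wdeg w t < Max (wdeg w ` (KS g - Std))} * (card (T n) + 1)
     + card {t\<in>KS g - Std. wdeg w t = Max (wdeg w ` (KS g - Std))})"

lemma NF_exists_aux:
  "\<forall>g. phiM n g = k \<longrightarrow> KS g \<subseteq> T n \<longrightarrow>
     (\<exists>s. g - s \<in> I \<and> KS s \<subseteq> T n \<inter> Std \<and> (\<forall>\<mu>\<in>KS s. \<exists>\<nu>\<in>KS g. wdeg w \<mu> \<le> wdeg w \<nu>))"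
proof (induction k rule: less_induct)
  case (less k)
  show ?case
  proof (intro allI impI)
    fix g :: "(nat,'k) mpoly" assume phk: "phiM n g = k" and gT: "KS g \<subseteq> T n"
    let ?N = "KS g - Std"
    show "\<exists>s. g - s \<in> I \<and> KS s \<subseteq> T n \<inter> Std \<and> (\<forall>\<mu>\<in>KS s. \<exists>\<nu>\<in>KS g. wdeg w \<mu> \<le> wdeg w \<nu>)"
    proof (cases "?N = {}")
      case True
      then have "KS g \<subseteq> Std" by blast
      moreover have "g - g \<in> I" using ideal_zero[OF ideal] by simp
      ultimately show ?thesis using gT by blast
    next
      case False
      define c where "c = Max (wdeg w ` ?N)"
      have finN: "finite ?N" by simp
      have "c \<in> wdeg w ` ?N" unfolding c_def using False finN by (intro Max_in) auto
      then obtain m where m: "m \<in> KS g" "m \<notin> Std" "wdeg w m = c" by blast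
      have cge: "\<And>t. t \<in> ?N \<Longrightarrow> wdeg w t \<le> c" unfolding c_def using finN by (intro Max_ge) auto
      from m(2) obtain f e where f: "f \<in> F" "m = LMf f + e" unfolding Std_def divs_def by blast
      have mT: "m \<in> T n" using gT m(1) by blast
      have eV: "KS e \<subseteq> V" using mT f(2) by (simp add: T_def keys_add_mon)
      define r where "r = SG e (LK g m / LK f (LMf f)) * f"
      have me: "e + LMf f = m" using f(2) by (simp add: add.commute)
      have rI: "r \<in> I" unfolding r_def by (rule reducer(1)[OF f(1) eV])
      have Lr: "LK r m = LK g m" unfolding r_def using reducer(2)[OF f(1) eV, of "LK g m"] me by simp
      have rlow: "\<And>\<nu>. \<nu> \<in> KS r \<Longrightarrow> \<nu> \<noteq> m \<Longrightarrow> wdeg w \<nu> < c"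
        unfolding r_def using reducer(3)[OF f(1) eV, of _ "LK g m"] me m(3) by simp
      have rT: "\<And>\<nu>. \<nu> \<in> KS r \<Longrightarrow> \<nu> \<in> T n"
        unfolding r_def using reducer(4)[OF f(1) eV, of _ "LK g m"] me mT by (simp add: T_def)
      define g' where "g' = g - r"
      have g'T: "KS g' \<subseteq> T n" using keys_diff[of g r] gT rT unfolding g'_def by blast
      have g'm: "LK g' m = 0" by (simp add: g'_def lookup_minus Lr)
      have g'keys: "(\<nu> \<in> KS g \<and> \<nu> \<noteq> m) \<or> wdeg w \<nu> < c" if "\<nu> \<in> KS g'" for \<nu>
      proof (cases "\<nu> \<in> KS r")
        case True
        have "\<nu> \<noteq> m" using that g'm by (metis in_keys_iff)
        then show ?thesis using rlow[OF True] by blast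
      next
        case False
        then have "LK g' \<nu> = LK g \<nu>" by (simp add: g'_def lookup_minus not_in_keys_iff_lookup_eq_zero)
        then have "\<nu> \<in> KS g" using that by (simp add: in_keys_iff)
        moreover have "\<nu> \<noteq> m" using that g'm by (metis in_keys_iff)
        ultimately show ?thesis by blast
      qed
      have N'sub: "KS g' - Std \<subseteq> (?N - {m}) \<union> {t \<in> T n. wdeg w t < c}"
        using g'keys g'T by blast
      have N'le: "\<And>t. t \<in> KS g' - Std \<Longrightarrow> wdeg w t \<le> c"
        using N'sub cge by fastforce
      have bound: "\<exists>\<nu>'\<in>KS g. wdeg w \<nu> \<le> wdeg w \<nu>'" if "\<nu> \<in> KS g'" for \<nu>
        using g'keys[OF that] m(1) m(3) by (metis order_le_less order_refl)
      let ?B = "card (T n) + 1"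
      let ?N' = "KS g' - Std"
      have finT: "finite (T n)" by (rule T_fin)
      have phg: "phiM n g = card {t\<in>T n. wdeg w t < c} * ?B + card {t\<in>?N. wdeg w t = c}"
        unfolding phiM_def c_def using False by simp
      have pos: "card {t\<in>?N. wdeg w t = c} \<ge> 1"
      proof -
        have "m \<in> {t\<in>?N. wdeg w t = c}" using m by blast
        then have "{t\<in>?N. wdeg w t = c} \<noteq> {}" by blast
        moreover have "finite {t\<in>?N. wdeg w t = c}" by simp
        ultimately show ?thesis by (simp add: Suc_leI card_gt_0_iff)
      qed
      have less': "phiM n g' < k"
      proof (cases "?N' = {}")
        case True
        then have "phiM n g' = 0" by (simp add: phiM_def)
        then show ?thesis using phk phg pos by simp
      next
        case False': False
        define c' where "c' = Max (wdeg w ` ?N')"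
        have "c' \<in> wdeg w ` ?N'" unfolding c'_def using False' by (intro Max_in) auto
        then obtain m' where m': "m' \<in> ?N'" "wdeg w m' = c'" by blast
        have c'c: "c' \<le> c" using N'le[OF m'(1)] m'(2) by simp
        have phg': "phiM n g' = card {t\<in>T n. wdeg w t < c'} * ?B + card {t\<in>?N'. wdeg w t = c'}"
          unfolding phiM_def c'_def using False' by simp
        show ?thesis
        proof (cases "c' = c")
          case True
          have sub: "{t\<in>?N'. wdeg w t = c'} \<subseteq> {t\<in>?N. wdeg w t = c} - {m}"
            using N'sub True by fastforce
          have "card {t\<in>?N'. wdeg w t = c'} \<le> card ({t\<in>?N. wdeg w t = c} - {m})"
            by (rule card_mono[OF _ sub]) simp
          also have "\<dots> < card {t\<in>?N. wdeg w t = c}"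
            by (rule card_Diff1_less) (use m in auto)
          finally show ?thesis using phk phg phg' True by simp
        next
          case False
          then have c'lt: "c' < c" using c'c by simp
          have m'T: "m' \<in> T n" using m' g'T by blast
          have psub: "{t\<in>T n. wdeg w t < c'} \<subset> {t\<in>T n. wdeg w t < c}"
          proof
            show "{t\<in>T n. wdeg w t < c'} \<subseteq> {t\<in>T n. wdeg w t < c}" using c'lt by auto
            show "{t\<in>T n. wdeg w t < c'} \<noteq> {t\<in>T n. wdeg w t < c}"
              using m'T m'(2) c'lt by blast
          qed
          have a: "card {t\<in>T n. wdeg w t < c'} < card {t\<in>T n. wdeg w t < c}"
            by (rule psubset_card_mono) (use finT psub in auto)
          have x: "card {t\<in>?N'. wdeg w t = c'} \<le> card (T n)"
            by (rule card_mono[OF finT]) (use g'T in blast)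
          have "phiM n g' < (card {t\<in>T n. wdeg w t < c'} + 1) * ?B"
            using phg' x by simp
          also have "\<dots> \<le> card {t\<in>T n. wdeg w t < c} * ?B"
            using a by (intro mult_le_mono1) simp
          also have "\<dots> \<le> phiM n g" using phg by simp
          finally show ?thesis using phk by simp
        qed
      qed
      obtain s where s: "g' - s \<in> I" "KS s \<subseteq> T n \<inter> Std"
          "\<forall>\<mu>\<in>KS s. \<exists>\<nu>\<in>KS g'. wdeg w \<mu> \<le> wdeg w \<nu>"
        using less.IH[OF less'] g'T by blast
      have "g - s = r + (g' - s)" by (simp add: g'_def)
      then have "g - s \<in> I" using ideal_add[OF ideal rI s(1)] by metis
      moreover have "\<forall>\<mu>\<in>KS s. \<exists>\<nu>\<in>KS g. wdeg w \<mu> \<le> wdeg w \<nu>"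
        using s(3) bound by (meson order_trans)
      ultimately show ?thesis using s(2) by blast
    qed
  qed
qed

lemma NF_exists:
  assumes "KS g \<subseteq> T n"
  shows "\<exists>s. g - s \<in> I \<and> KS s \<subseteq> T n \<inter> Std \<and> (\<forall>\<mu>\<in>KS s. \<exists>\<nu>\<in>KS g. wdeg w \<mu> \<le> wdeg w \<nu>)"
  using NF_exists_aux assms by blast

end


context side begin

definition NF where
  "NF a = (THE s. SG a 1 - s \<in> I \<and> KS s \<subseteq> Std \<and> s \<in> polys_in V)"

lemma NF_unique:
  assumes "g - s1 \<in> I" "KS s1 \<subseteq> Std" "g - s2 \<in> I" "KS s2 \<subseteq> Std"
  shows "s1 = s2"
proof -
  have "s1 - s2 = (g - s2) - (g - s1)" by simp
  then have "s1 - s2 \<in> I" using ideal_diff[OF ideal assms(3) assms(1)] by simp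
  moreover have "KS (s1 - s2) \<subseteq> Std" using keys_diff[of s1 s2] assms(2,4) by blast
  ultimately have "s1 - s2 = 0" by (rule std_unique)
  then show ?thesis by simp
qed

lemma keysT_polys: "KS s \<subseteq> T n \<Longrightarrow> s \<in> polys_in V"
  by (rule polys_inI) (auto simp: T_def)

lemma NF_char:
  assumes "SG a 1 - s \<in> I" "KS s \<subseteq> Std" "s \<in> polys_in V"
  shows "NF a = s"
  unfolding NF_def
proof (rule the_equality)
  show "SG a 1 - s \<in> I \<and> KS s \<subseteq> Std \<and> s \<in> polys_in V" using assms by blast
  fix s' assume "SG a 1 - s' \<in> I \<and> KS s' \<subseteq> Std \<and> s' \<in> polys_in V"
  then show "s' = s" using NF_unique assms by blast
qed

lemma NF_basic:
  assumes aV: "KS a \<subseteq> V"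
  shows "SG a 1 - NF a \<in> I" "KS (NF a) \<subseteq> Std" "NF a \<in> polys_in V"
    "\<And>\<mu>. \<mu> \<in> KS (NF a) \<Longrightarrow> wdeg w \<mu> \<le> wdeg w a"
proof -
  have "KS (SG a 1) \<subseteq> T (mdeg a)" using aV by (simp add: T_def)
  from NF_exists[OF this] obtain s where s: "SG a 1 - s \<in> I" "KS s \<subseteq> T (mdeg a) \<inter> Std"
      "\<forall>\<mu>\<in>KS s. \<exists>\<nu>\<in>KS (SG a (1::'k)). wdeg w \<mu> \<le> wdeg w \<nu>" by blast
  have sp: "s \<in> polys_in V" using s(2) keysT_polys by blast
  have eq: "NF a = s" by (rule NF_char) (use s sp in auto)
  show "SG a 1 - NF a \<in> I" "KS (NF a) \<subseteq> Std" "NF a \<in> polys_in V" using eq s sp by auto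
  fix \<mu> assume "\<mu> \<in> KS (NF a)"
  then show "wdeg w \<mu> \<le> wdeg w a" using s(3) eq by simp
qed

lemma NF_std_keys:
  assumes "a \<in> Std" "KS a \<subseteq> V" shows "NF a = SG a 1"
  by (rule NF_char) (use assms ideal_zero[OF ideal] polys_in_single in auto)

lemma NF_nonstd:
  assumes aV: "KS a \<subseteq> V" and na: "a \<notin> Std" and mu: "\<mu> \<in> KS (NF a)"
  shows "wdeg w \<mu> < wdeg w a"
proof -
  from na obtain f e where f: "f \<in> F" "a = LMf f + e" unfolding Std_def divs_def by blast
  have eV: "KS e \<subseteq> V" using aV f(2) by (simp add: keys_add_mon)
  have me: "e + LMf f = a" using f(2) by (simp add: add.commute)
  define r where "r = SG e (1 / LK f (LMf f)) * f"
  have rI: "r \<in> I" unfolding r_def by (rule reducer(1)[OF f(1) eV])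
  have Lr: "LK r a = 1" unfolding r_def using reducer(2)[OF f(1) eV, of 1] me by simp
  have rlow: "\<And>\<nu>. \<nu> \<in> KS r \<Longrightarrow> \<nu> \<noteq> a \<Longrightarrow> wdeg w \<nu> < wdeg w a"
    unfolding r_def using reducer(3)[OF f(1) eV, of _ 1] me by simp
  have rT: "\<And>\<nu>. \<nu> \<in> KS r \<Longrightarrow> \<nu> \<in> T (mdeg a)"
    unfolding r_def using reducer(4)[OF f(1) eV, of _ 1] me aV by (simp add: T_def)
  define g' where "g' = SG a 1 - r"
  have g'a: "LK g' a = 0" by (simp add: g'_def lookup_minus Lr)
  have g'k: "\<nu> \<in> KS r \<and> \<nu> \<noteq> a" if "\<nu> \<in> KS g'" for \<nu>
  proof -
    have ne: "\<nu> \<noteq> a" using that g'a by (metis in_keys_iff)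
    have "\<nu> \<in> KS (SG a (1::'k)) \<or> \<nu> \<in> KS r" using that keys_diff[of "SG a 1" r] unfolding g'_def by blast
    then show ?thesis using ne by (simp split: if_splits)
  qed
  have g'T: "KS g' \<subseteq> T (mdeg a)" using g'k rT by blast
  from NF_exists[OF g'T] obtain s where s: "g' - s \<in> I" "KS s \<subseteq> T (mdeg a) \<inter> Std"
      "\<forall>\<mu>\<in>KS s. \<exists>\<nu>\<in>KS g'. wdeg w \<mu> \<le> wdeg w \<nu>" by blast
  have "SG a 1 - s = r + (g' - s)" by (simp add: g'_def)
  then have "SG a 1 - s \<in> I" using ideal_add[OF ideal rI s(1)] by metis
  then have eq: "NF a = s" by (rule NF_char) (use s keysT_polys in blast)+
  obtain \<nu> where "\<nu> \<in> KS g'" "wdeg w \<mu> \<le> wdeg w \<nu>" using s(3) mu eq by blast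
  then show ?thesis using g'k rlow by force
qed

definition NFL where "NFL g = GL (\<lambda>a c. SG 0 c * NF a) g"

lemma addhom_NFL: "addhom (\<lambda>a c. SG 0 c * NF a)"
  by (simp add: addhom_def single_add distrib_right)

lemma NFL_I:
  assumes g: "g \<in> I"
  shows "NFL g = 0"
proof -
  have gV: "\<And>a. a \<in> KS g \<Longrightarrow> KS a \<subseteq> V" using g I_sub polys_inD by blast
  let ?s = "NFL g"
  have s_def: "?s = (\<Sum>a\<in>KS g. SG 0 (LK g a) * NF a)" by (simp add: NFL_def GL_def)
  have "KS ?s \<subseteq> (\<Union>a\<in>KS g. KS (SG 0 (LK g a) * NF a))" unfolding s_def by (rule keys_sum)
  also have "\<dots> \<subseteq> Std" using keys_scal NF_basic(2)[OF gV] by blast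
  finally have sk: "KS ?s \<subseteq> Std" .
  have "g - ?s = (\<Sum>a\<in>KS g. SG a (LK g a)) - (\<Sum>a\<in>KS g. SG 0 (LK g a) * NF a)"
    by (simp add: poly_expand s_def)
  also have "\<dots> = (\<Sum>a\<in>KS g. SG 0 (LK g a) * (SG a 1 - NF a))"
    by (simp add: sum_subtractf[symmetric] right_diff_distrib mult_single)
  finally have eq: "g - ?s = (\<Sum>a\<in>KS g. SG 0 (LK g a) * (SG a 1 - NF a))" .
  have "g - ?s \<in> I" unfolding eq
    by (rule ideal_sum[OF ideal], rule ideal_mult[OF ideal scal_polys_in NF_basic(1)[OF gV]])
  then have "g - (g - ?s) \<in> I" using ideal_diff[OF ideal g] by blast
  then have "?s \<in> I" by simp
  then show ?thesis using std_unique sk by blast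
qed

lemma NFL_shift:
  "NFL (SG e 1 * f) = (\<Sum>a\<in>KS f. SG 0 (LK f a) * NF (e + a))"
proof -
  have "NFL (SG e 1 * f) = NFL (\<Sum>a\<in>KS f. SG (e + a) (LK f a))"
    by (simp add: single_mult_expand)
  also have "\<dots> = (\<Sum>a\<in>KS f. NFL (SG (e + a) (LK f a)))"
    unfolding NFL_def by (rule GL_sum[OF addhom_NFL])
  also have "\<dots> = (\<Sum>a\<in>KS f. SG 0 (LK f a) * NF (e + a))"
    unfolding NFL_def by (simp add: GL_single)
  finally show ?thesis .
qed

lemma NF_shift_zero:
  assumes "f \<in> I" "KS e \<subseteq> V"
  shows "(\<Sum>a\<in>KS f. LK f a * LK (NF (e + a)) a0) = 0"
proof -
  have "SG e 1 * f \<in> I" by (rule ideal_mult[OF ideal polys_in_single[OF assms(2)] assms(1)])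
  then have "NFL (SG e 1 * f) = 0" by (rule NFL_I)
  then have "LK (\<Sum>a\<in>KS f. SG 0 (LK f a) * NF (e + a)) a0 = 0" by (simp add: NFL_shift)
  then show ?thesis by (simp add: lookup_sum lookup_scal)
qed

end


definition xp :: "(nat + nat \<Rightarrow>\<^sub>0 nat) \<Rightarrow> (nat \<Rightarrow>\<^sub>0 nat)" where
  "xp \<mu> = Poly_Mapping.map_key Inl \<mu>"
definition yp :: "(nat + nat \<Rightarrow>\<^sub>0 nat) \<Rightarrow> (nat \<Rightarrow>\<^sub>0 nat)" where
  "yp \<mu> = Poly_Mapping.map_key Inr \<mu>"

lemma lookup_xp: "LK (xp \<mu>) j = LK \<mu> (Inl j)"
  unfolding xp_def by (rule lookup_map_key) simp
lemma lookup_yp: "LK (yp \<mu>) j = LK \<mu> (Inr j)"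
  unfolding yp_def by (rule lookup_map_key) simp

lemma xp_add: "xp (a + b) = xp a + xp b"
  by (rule poly_mapping_eqI) (simp add: lookup_xp lookup_add)
lemma yp_add: "yp (a + b) = yp a + yp b"
  by (rule poly_mapping_eqI) (simp add: lookup_yp lookup_add)
lemma xp_zero [simp]: "xp 0 = 0"
  by (rule poly_mapping_eqI) (simp add: lookup_xp)
lemma yp_zero [simp]: "yp 0 = 0"
  by (rule poly_mapping_eqI) (simp add: lookup_yp)

lemma xp_single: "xp (SG v n) = (case v of Inl j \<Rightarrow> SG j n | Inr k \<Rightarrow> 0)"
  by (rule poly_mapping_eqI) (simp add: lookup_xp lookup_single when_def split: sum.splits)
lemma yp_single: "yp (SG v n) = (case v of Inl j \<Rightarrow> 0 | Inr k \<Rightarrow> SG k n)"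
  by (rule poly_mapping_eqI) (simp add: lookup_yp lookup_single when_def split: sum.splits)

lemma xp_ren_Inl [simp]: "xp (ren_mon Inl a) = a"
  by (rule addfun_eqI[where f = "\<lambda>a. xp (ren_mon Inl a)" and g = "\<lambda>a. a"])
     (simp_all add: ren_mon_add xp_add ren_mon_single xp_single)
lemma xp_ren_Inr [simp]: "xp (ren_mon Inr a) = 0"
  by (rule addfun_eqI[where f = "\<lambda>a. xp (ren_mon Inr a)" and g = "\<lambda>a. 0"])
     (simp_all add: ren_mon_add xp_add ren_mon_single xp_single)
lemma yp_ren_Inl [simp]: "yp (ren_mon Inl a) = 0"
  by (rule addfun_eqI[where f = "\<lambda>a. yp (ren_mon Inl a)" and g = "\<lambda>a. 0"])
     (simp_all add: ren_mon_add yp_add ren_mon_single yp_single)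
lemma yp_ren_Inr [simp]: "yp (ren_mon Inr a) = a"
  by (rule addfun_eqI[where f = "\<lambda>a. yp (ren_mon Inr a)" and g = "\<lambda>a. a"])
     (simp_all add: ren_mon_add yp_add ren_mon_single yp_single)

lemma xy_decomp: "\<mu> = ren_mon Inl (xp \<mu>) + ren_mon Inr (yp \<mu>)"
  by (rule addfun_eqI[where f = "\<lambda>a. a" and g = "\<lambda>\<mu>. ren_mon Inl (xp \<mu>) + ren_mon Inr (yp \<mu>)"])
     (simp_all add: ren_mon_add xp_add yp_add ren_mon_single xp_single yp_single ac_simps split: sum.splits)

lemma xy_eqI: "xp a = xp b \<Longrightarrow> yp a = yp b \<Longrightarrow> a = b"
  using xy_decomp[of a] xy_decomp[of b] by metis

definition wxy :: "(nat \<Rightarrow> real) \<Rightarrow> (nat \<Rightarrow> real) \<Rightarrow> nat + nat \<Rightarrow> real" where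
  "wxy w1 w2 v = (case v of Inl j \<Rightarrow> w1 j | Inr k \<Rightarrow> w2 k)"

lemma wdeg_xy: "wdeg (wxy w1 w2) \<mu> = wdeg w1 (xp \<mu>) + wdeg w2 (yp \<mu>)"
  by (rule addfun_eqI[where f = "wdeg (wxy w1 w2)" and g = "\<lambda>\<mu>. wdeg w1 (xp \<mu>) + wdeg w2 (yp \<mu>)"])
     (simp_all add: wdeg_add xp_add yp_add xp_single yp_single wxy_def split: sum.splits)

lemma keys_xp: "KS \<mu> \<subseteq> Inl ` V1 \<union> Inr ` V2 \<Longrightarrow> KS (xp \<mu>) \<subseteq> V1"
  by (auto simp: in_keys_iff lookup_xp dest!: subsetD[of _ _ "Inl _"] simp del: lookup_not_eq_zero_eq_in_keys)

lemma keys_yp: "KS \<mu> \<subseteq> Inl ` V1 \<union> Inr ` V2 \<Longrightarrow> KS (yp \<mu>) \<subseteq> V2"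
proof
  fix k assume "KS \<mu> \<subseteq> Inl ` V1 \<union> Inr ` V2" "k \<in> KS (yp \<mu>)"
  then have "Inr k \<in> KS \<mu>" "KS \<mu> \<subseteq> Inl ` V1 \<union> Inr ` V2" by (simp_all add: in_keys_iff lookup_yp)
  then show "k \<in> V2" by blast
qed

lemma ren_mult_expand:
  "SG \<mu> c * ren_poly g f = (\<Sum>a\<in>KS f. SG (\<mu> + ren_mon g a) (c * LK f a))"
  by (simp add: ren_poly_def sum_distrib_left mult_single)

locale two_sides = S1: side V1 I F w1 + S2: side V2 J G w2
  for V1 and I F :: "(nat, 'k::field) mpoly set" and w1 and V2 and J G :: "(nat, 'k) mpoly set" and w2
begin

definition Vxy where "Vxy = Inl ` V1 \<union> Inr ` V2"

definition alpha where
  "alpha a0 b0 \<mu> = LK (S1.NF (xp \<mu>)) a0 * LK (S2.NF (yp \<mu>)) b0"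

definition ell where "ell a0 b0 p = GL (\<lambda>\<mu> c. c * alpha a0 b0 \<mu>) p"

lemma addhom_ell: "addhom (\<lambda>\<mu> c. c * alpha a0 b0 \<mu>)"
  by (simp add: addhom_def distrib_right)

lemma ell_add: "ell a0 b0 (p + q) = ell a0 b0 p + ell a0 b0 q"
  unfolding ell_def by (rule GL_add[OF addhom_ell])

lemma ell_sum: "ell a0 b0 (\<Sum>i\<in>A. g i) = (\<Sum>i\<in>A. ell a0 b0 (g i))"
  unfolding ell_def by (rule GL_sum[OF addhom_ell])

lemma ell_single: "ell a0 b0 (SG \<mu> c) = c * alpha a0 b0 \<mu>"
  unfolding ell_def by (rule GL_single) simp

definition Zs where
  "Zs = {p \<in> polys_in Vxy. \<forall>\<mu> c a0 b0. KS \<mu> \<subseteq> Vxy \<longrightarrow> ell a0 b0 (SG \<mu> c * p) = 0}"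

lemma Zs_ideal: "is_ideal_in (polys_in Vxy) Zs"
  unfolding is_ideal_in_def
proof (intro conjI ballI)
  show "Zs \<subseteq> polys_in Vxy" unfolding Zs_def by (rule Collect_subset)
  show "0 \<in> Zs" unfolding Zs_def by (simp add: ell_def)
next
  fix p q :: "(nat + nat, 'k) mpoly" assume p: "p \<in> Zs" and q: "q \<in> Zs"
  show "p + q \<in> Zs" unfolding Zs_def
  proof (intro CollectI conjI allI impI)
    show "p + q \<in> polys_in Vxy" using p q unfolding Zs_def by (simp add: polys_in_add)
    fix \<mu> :: "nat + nat \<Rightarrow>\<^sub>0 nat" and c :: 'k and a0 b0 assume "KS \<mu> \<subseteq> Vxy"
    then show "ell a0 b0 (SG \<mu> c * (p + q)) = 0"
      using p q unfolding Zs_def by (simp add: distrib_left ell_add)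
  qed
next
  fix h p :: "(nat + nat, 'k) mpoly" assume h: "h \<in> polys_in Vxy" and p: "p \<in> Zs"
  show "h * p \<in> Zs" unfolding Zs_def
  proof (intro CollectI conjI allI impI)
    show "h * p \<in> polys_in Vxy" using p h unfolding Zs_def by (simp add: polys_in_mult)
    fix \<mu> :: "nat + nat \<Rightarrow>\<^sub>0 nat" and c :: 'k and a0 b0 assume mu: "KS \<mu> \<subseteq> Vxy"
    have "SG \<mu> c * (h * p) = (\<Sum>\<nu>\<in>KS h. SG (\<mu> + \<nu>) (c * LK h \<nu>) * p)"
      by (simp add: mult.assoc[symmetric] single_mult_expand sum_distrib_right)
    then have "ell a0 b0 (SG \<mu> c * (h * p)) = (\<Sum>\<nu>\<in>KS h. ell a0 b0 (SG (\<mu> + \<nu>) (c * LK h \<nu>) * p))"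
      by (simp add: ell_sum)
    also have "\<dots> = 0"
    proof (rule sum.neutral, rule ballI)
      fix \<nu> assume "\<nu> \<in> KS h"
      then have "KS \<nu> \<subseteq> Vxy" using h polys_inD by blast
      then have "KS (\<mu> + \<nu>) \<subseteq> Vxy" using mu by (simp add: keys_add_mon)
      then show "ell a0 b0 (SG (\<mu> + \<nu>) (c * LK h \<nu>) * p) = 0" using p unfolding Zs_def by blast
    qed
    finally show "ell a0 b0 (SG \<mu> c * (h * p)) = 0" .
  qed
qed

lemma ren_mon_keys: "KS (ren_mon g a) \<subseteq> g ` KS a"
proof -
  have "KS (ren_mon g a) \<subseteq> (\<Union>v\<in>KS a. KS (SG (g v) (LK a v)))"
    unfolding ren_mon_def by (rule keys_sum)
  also have "\<dots> \<subseteq> g ` KS a"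
  proof (rule UN_least)
    fix v assume "v \<in> KS a"
    then show "KS (SG (g v) (LK a v)) \<subseteq> g ` KS a" by (simp only: keys_single) (simp split: if_splits)
  qed
  finally show ?thesis .
qed

lemma ren_poly_in:
  assumes "f \<in> polys_in V" "g ` V \<subseteq> W"
  shows "ren_poly g f \<in> polys_in W"
proof (rule polys_inI)
  fix m assume "m \<in> KS (ren_poly g f)"
  then have "m \<in> (\<Union>a\<in>KS f. KS (SG (ren_mon g a) (LK f a)))"
    unfolding ren_poly_def using keys_sum[of "\<lambda>a. SG (ren_mon g a) (LK f a)" "KS f"] by blast
  then obtain a where a0: "a \<in> KS f" "m \<in> KS (SG (ren_mon g a) (LK f a))" by blast
  then have a: "a \<in> KS f" "m = ren_mon g a" by (simp_all split: if_splits)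
  then show "KS m \<subseteq> W" using ren_mon_keys[of g a] polys_inD[OF assms(1) a(1)] assms(2) by blast
qed

lemma gens_in_Zs: "ren_poly Inl ` I \<union> ren_poly Inr ` J \<subseteq> Zs"
proof
  fix x assume "x \<in> ren_poly Inl ` I \<union> ren_poly Inr ` J"
  then consider (L) f where "f \<in> I" "x = ren_poly Inl f" | (R) g where "g \<in> J" "x = ren_poly Inr g"
    by blast
  then show "x \<in> Zs"
  proof cases
    case L
    have "Inl ` V1 \<subseteq> Vxy" unfolding Vxy_def by blast
    then have xin: "x \<in> polys_in Vxy" using L S1.I_sub ren_poly_in[of f V1 Inl Vxy] by blast
    show ?thesis unfolding Zs_def
    proof (intro CollectI conjI allI impI xin)
      fix \<mu> :: "nat + nat \<Rightarrow>\<^sub>0 nat" and c :: 'k and a0 b0 assume mu: "KS \<mu> \<subseteq> Vxy"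
      have "ell a0 b0 (SG \<mu> c * x) = (\<Sum>a\<in>KS f. (c * LK f a) * alpha a0 b0 (\<mu> + ren_mon Inl a))"
        by (simp add: L(2) ren_mult_expand ell_sum ell_single)
      also have "\<dots> = c * LK (S2.NF (yp \<mu>)) b0 * (\<Sum>a\<in>KS f. LK f a * LK (S1.NF (xp \<mu> + a)) a0)"
        by (simp add: alpha_def xp_add yp_add sum_distrib_left ac_simps)
      also have "\<dots> = 0"
        using S1.NF_shift_zero[OF L(1) keys_xp[of \<mu> V1 V2]] mu by (simp add: Vxy_def)
      finally show "ell a0 b0 (SG \<mu> c * x) = 0" .
    qed
  next
    case R
    have "Inr ` V2 \<subseteq> Vxy" unfolding Vxy_def by blast
    then have xin: "x \<in> polys_in Vxy" using R S2.I_sub ren_poly_in[of g V2 Inr Vxy] by blast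
    show ?thesis unfolding Zs_def
    proof (intro CollectI conjI allI impI xin)
      fix \<mu> :: "nat + nat \<Rightarrow>\<^sub>0 nat" and c :: 'k and a0 b0 assume mu: "KS \<mu> \<subseteq> Vxy"
      have "ell a0 b0 (SG \<mu> c * x) = (\<Sum>a\<in>KS g. (c * LK g a) * alpha a0 b0 (\<mu> + ren_mon Inr a))"
        by (simp add: R(2) ren_mult_expand ell_sum ell_single)
      also have "\<dots> = c * LK (S1.NF (xp \<mu>)) a0 * (\<Sum>a\<in>KS g. LK g a * LK (S2.NF (yp \<mu> + a)) b0)"
        by (simp add: alpha_def xp_add yp_add sum_distrib_left ac_simps)
      also have "\<dots> = 0"
        using S2.NF_shift_zero[OF R(1) keys_yp[of \<mu> V1 V2]] mu by (simp add: Vxy_def)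
      finally show "ell a0 b0 (SG \<mu> c * x) = 0" .
    qed
  qed
qed

lemma ell_vanish:
  assumes "p \<in> ideal_gen (polys_in Vxy) (ren_poly Inl ` I \<union> ren_poly Inr ` J)"
  shows "ell a0 b0 p = 0"
proof -
  have "p \<in> Zs" using ideal_gen_least[OF Zs_ideal gens_in_Zs] assms by blast
  moreover have "KS (0::nat + nat \<Rightarrow>\<^sub>0 nat) \<subseteq> Vxy" by simp
  ultimately have "ell a0 b0 (SG 0 1 * p) = 0" unfolding Zs_def by blast
  then show ?thesis by simp
qed

theorem E_main:
  assumes p: "p \<in> ideal_gen (polys_in Vxy) (ren_poly Inl ` I \<union> ren_poly Inr ` J)"
    and mu0: "\<mu>0 \<in> KS p" and std1: "xp \<mu>0 \<in> S1.Std" and std2: "yp \<mu>0 \<in> S2.Std"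
    and top: "\<forall>\<nu>\<in>KS p. wdeg (wxy w1 w2) \<nu> \<le> wdeg (wxy w1 w2) \<mu>0"
  shows False
proof -
  let ?a0 = "xp \<mu>0" and ?b0 = "yp \<mu>0"
  have gens: "ren_poly Inl ` I \<union> ren_poly Inr ` J \<subseteq> polys_in Vxy"
    using gens_in_Zs unfolding Zs_def by blast
  have pV: "p \<in> polys_in Vxy" using p ideal_sub[OF ideal_gen_ideal[OF gens]] by blast
  have kV: "KS (xp \<nu>) \<subseteq> V1 \<and> KS (yp \<nu>) \<subseteq> V2" if "\<nu> \<in> KS p" for \<nu>
  proof -
    have "KS \<nu> \<subseteq> Inl ` V1 \<union> Inr ` V2" using polys_inD[OF pV that] unfolding Vxy_def .
    then show ?thesis using keys_xp[of \<nu> V1 V2] keys_yp[of \<nu> V1 V2] by blast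
  qed
  have a_mu0: "alpha ?a0 ?b0 \<mu>0 = 1"
    using kV[OF mu0] S1.NF_std_keys[OF std1] S2.NF_std_keys[OF std2] by (simp add: alpha_def)
  have a_other: "alpha ?a0 ?b0 \<nu> = 0" if nu: "\<nu> \<in> KS p" "\<nu> \<noteq> \<mu>0" for \<nu>
  proof (rule ccontr)
    assume "alpha ?a0 ?b0 \<nu> \<noteq> 0"
    then have "LK (S1.NF (xp \<nu>)) ?a0 \<noteq> 0" "LK (S2.NF (yp \<nu>)) ?b0 \<noteq> 0"
      unfolding alpha_def by (metis mult_zero_left, metis mult_zero_right)
    then have k1: "?a0 \<in> KS (S1.NF (xp \<nu>))" and k2: "?b0 \<in> KS (S2.NF (yp \<nu>))"
      by (simp_all add: in_keys_iff)
    have le1: "wdeg w1 ?a0 \<le> wdeg w1 (xp \<nu>)" using S1.NF_basic(4)[OF _ k1] kV[OF nu(1)] by blast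
    have le2: "wdeg w2 ?b0 \<le> wdeg w2 (yp \<nu>)" using S2.NF_basic(4)[OF _ k2] kV[OF nu(1)] by blast
    show False
    proof (cases "xp \<nu> \<in> S1.Std \<and> yp \<nu> \<in> S2.Std")
      case True
      then have "S1.NF (xp \<nu>) = SG (xp \<nu>) 1" "S2.NF (yp \<nu>) = SG (yp \<nu>) 1"
        using S1.NF_std_keys S2.NF_std_keys kV[OF nu(1)] by blast+
      then have "?a0 = xp \<nu>" "?b0 = yp \<nu>" using k1 k2 by (simp_all split: if_splits)
      then have "\<nu> = \<mu>0" by (metis xy_eqI)
      then show False using nu(2) by blast
    next
      case False
      then have "wdeg w1 ?a0 < wdeg w1 (xp \<nu>) \<or> wdeg w2 ?b0 < wdeg w2 (yp \<nu>)"
        using S1.NF_nonstd[OF _ _ k1] S2.NF_nonstd[OF _ _ k2] kV[OF nu(1)] by blast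
      then have "wdeg (wxy w1 w2) \<mu>0 < wdeg (wxy w1 w2) \<nu>"
        using le1 le2 unfolding wdeg_xy by linarith
      then show False using top nu(1) by (meson not_le)
    qed
  qed
  have "ell ?a0 ?b0 p = (\<Sum>\<nu>\<in>KS p. LK p \<nu> * alpha ?a0 ?b0 \<nu>)" by (simp add: ell_def GL_def)
  also have "\<dots> = LK p \<mu>0 * alpha ?a0 ?b0 \<mu>0"
    by (rule sum.remove[OF finite_keys mu0, THEN trans]) (simp add: a_other)
  also have "\<dots> = LK p \<mu>0" using a_mu0 by simp
  finally have "ell ?a0 ?b0 p = LK p \<mu>0" .
  moreover have "LK p \<mu>0 \<noteq> 0" using mu0 by (simp add: in_keys_iff)
  ultimately show False using ell_vanish[OF p] by simp
qed

end


definition cwalk :: "(nat \<times> nat) set \<Rightarrow> (nat \<times> nat) set \<Rightarrow> nat \<Rightarrow> (nat \<Rightarrow> nat) \<Rightarrow> (nat \<Rightarrow> nat) \<Rightarrow> bool" where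
  "cwalk A B l J K \<longleftrightarrow> l \<ge> 1 \<and> (\<forall>i<l. (J i, K i) \<in> A \<and> (J (Suc i mod l), K i) \<in> B)"

lemma not_inj_nat_finite:
  fixes f :: "nat \<Rightarrow> 'a"
  assumes "range f \<subseteq> S" "finite S"
  shows "\<exists>n1 n2. n1 < n2 \<and> f n1 = f n2"
proof -
  have "\<not> inj f"
  proof
    assume "inj f"
    then have "finite (UNIV :: nat set)" using finite_imageD[of f UNIV] finite_subset[OF assms] by blast
    then show False by simp
  qed
  then obtain x y where "x \<noteq> y" "f x = f y" unfolding inj_def by blast
  then show ?thesis by (metis linorder_neqE_nat)
qed

lemma walk_exists:
  assumes finA: "finite A" and neA: "x0 \<in> A"
    and hA: "\<And>j k. (j, k) \<in> A \<Longrightarrow> \<exists>j'. (j', k) \<in> B"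
    and hB: "\<And>j k. (j, k) \<in> B \<Longrightarrow> \<exists>k'. (j, k') \<in> A"
  shows "\<exists>l J K. cwalk A B l J K"
proof -
  define nxt where "nxt x = (let j = (SOME j. (j, snd x) \<in> B) in (j, SOME k. (j, k) \<in> A))" for x :: "nat \<times> nat"
  have nxt: "nxt x \<in> A \<and> (fst (nxt x), snd x) \<in> B" if xA: "x \<in> A" for x
  proof -
    obtain j' where "(j', snd x) \<in> B" using hA[of "fst x" "snd x"] xA by (metis prod.collapse)
    then have jB: "((SOME j. (j, snd x) \<in> B), snd x) \<in> B" by (rule someI)
    then obtain k' where "((SOME j. (j, snd x) \<in> B), k') \<in> A" using hB by blast
    then have "((SOME j. (j, snd x) \<in> B), SOME k. ((SOME j. (j, snd x) \<in> B), k) \<in> A) \<in> A" by (rule someI)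
    then show ?thesis using jB by (simp add: nxt_def Let_def)
  qed
  define st where "st n = (nxt ^^ n) x0" for n
  have stA: "st n \<in> A" for n by (induction n) (auto simp: st_def neA nxt)
  have stS: "st (Suc n) = nxt (st n)" for n by (simp add: st_def)
  have "range (\<lambda>n. fst (st n)) \<subseteq> fst ` A" using stA by blast
  then obtain n1 n2 where n12: "n1 < n2" "fst (st n1) = fst (st n2)"
    using not_inj_nat_finite[of "\<lambda>n. fst (st n)"] finA by blast
  define l where "l = n2 - n1"
  define J where "J i = fst (st (n1 + i))" for i
  define K where "K i = snd (st (n1 + i))" for i
  have "cwalk A B l J K" unfolding cwalk_def
  proof (intro conjI allI impI)
    show "1 \<le> l" using n12 by (simp add: l_def)
    fix i assume i: "i < l"
    show "(J i, K i) \<in> A" using stA by (simp add: J_def K_def)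
    show "(J (Suc i mod l), K i) \<in> B"
    proof (cases "Suc i < l")
      case True
      then have "J (Suc i mod l) = fst (nxt (st (n1 + i)))" by (simp add: J_def stS)
      then show ?thesis using nxt[OF stA[of "n1 + i"]] by (simp add: K_def)
    next
      case False
      then have "Suc i = l" using i by simp
      then have "J (Suc i mod l) = fst (st n2)" by (simp add: J_def n12(2))
      also have "n2 = Suc (n1 + i)" using \<open>Suc i = l\<close> n12(1) by (simp add: l_def)
      then have "st n2 = nxt (st (n1 + i))" using stS by simp
      finally show ?thesis using nxt[OF stA[of "n1 + i"]] by (simp add: K_def)
    qed
  qed
  then show ?thesis by blast
qed

lemma simple_cycle_exists:
  assumes ex: "\<exists>l J K. cwalk A B l J K" and disj: "A \<inter> B = {}"
  shows "\<exists>l J K. cwalk A B l J K \<and> inj_on J {..<l} \<and> inj_on K {..<l} \<and> l \<ge> 2"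
proof -
  obtain l where l: "\<exists>J K. cwalk A B l J K" "\<And>l'. l' < l \<Longrightarrow> \<not> (\<exists>J K. cwalk A B l' J K)"
    using ex exists_least_iff[of "\<lambda>l. \<exists>J K. cwalk A B l J K"] by blast
  obtain J K where w: "cwalk A B l J K" using l(1) by blast
  have l1: "l \<ge> 1" and wA: "\<And>i. i < l \<Longrightarrow> (J i, K i) \<in> A"
    and wB: "\<And>i. i < l \<Longrightarrow> (J (Suc i mod l), K i) \<in> B" using w by (auto simp: cwalk_def)
  have l2: "l \<ge> 2"
  proof (rule ccontr)
    assume "\<not> 2 \<le> l"
    then have "l = 1" using l1 by simp
    then show False using wA[of 0] wB[of 0] disj by auto
  qed
  have injJ: "inj_on J {..<l}"
  proof (rule ccontr)
    assume "\<not> inj_on J {..<l}"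
    then obtain p q where pq: "p < l" "q < l" "p \<noteq> q" "J p = J q" unfolding inj_on_def by blast
    then obtain p q where pq: "p < q" "q < l" "J p = J q" by (metis linorder_neqE_nat)
    define J' where "J' i = J (p + i)" for i
    define K' where "K' i = K (p + i)" for i
    have "cwalk A B (q - p) J' K'" unfolding cwalk_def
    proof (intro conjI allI impI)
      show "1 \<le> q - p" using pq by simp
      fix i assume i: "i < q - p"
      show "(J' i, K' i) \<in> A" using wA[of "p + i"] i pq by (simp add: J'_def K'_def)
      show "(J' (Suc i mod (q - p)), K' i) \<in> B"
      proof (cases "Suc i < q - p")
        case True
        then show ?thesis using wB[of "p + i"] pq by (simp add: J'_def K'_def)
      next
        case False
        then have si: "Suc i = q - p" using i by simp
        have "(J (Suc (p + i) mod l), K (p + i)) \<in> B" using wB[of "p + i"] i pq by simp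
        moreover have "Suc (p + i) = q" using si pq by simp
        ultimately show ?thesis using pq si by (simp add: J'_def K'_def)
      qed
    qed
    moreover have "q - p < l" using pq by simp
    ultimately show False using l(2) by blast
  qed
  have injK: "inj_on K {..<l}"
  proof (rule ccontr)
    assume "\<not> inj_on K {..<l}"
    then obtain p q where pq: "p < l" "q < l" "p \<noteq> q" "K p = K q" unfolding inj_on_def by blast
    then obtain p q where pq: "p < q" "q < l" "K p = K q" by (metis linorder_neqE_nat)
    define J' where "J' i = J (Suc p + i)" for i
    define K' where "K' i = K (Suc p + i)" for i
    have "cwalk A B (q - p) J' K'" unfolding cwalk_def
    proof (intro conjI allI impI)
      show "1 \<le> q - p" using pq by simp
      fix i assume i: "i < q - p"
      show "(J' i, K' i) \<in> A" using wA[of "Suc p + i"] i pq by (simp add: J'_def K'_def)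
      show "(J' (Suc i mod (q - p)), K' i) \<in> B"
      proof (cases "Suc i < q - p")
        case True
        then show ?thesis using wB[of "Suc p + i"] pq by (simp add: J'_def K'_def)
      next
        case False
        then have si: "Suc i = q - p" using i by simp
        have "(J (Suc p mod l), K p) \<in> B" using wB[of p] pq by simp
        moreover have "Suc p + i = q" using si pq by simp
        ultimately show ?thesis using pq si by (simp add: J'_def K'_def)
      qed
    qed
    moreover have "q - p < l" using pq by simp
    ultimately show False using l(2) by blast
  qed
  show ?thesis using w injJ injK l2 by blast
qed


definition bin :: "('v \<Rightarrow>\<^sub>0 nat) \<Rightarrow> ('v \<Rightarrow>\<^sub>0 nat) \<Rightarrow> ('v, 'k::comm_ring_1) mpoly" where
  "bin a b = SG a 1 - SG b 1"

definition HI :: "(nat \<times> nat) set \<Rightarrow> (nat \<times> nat, 'k::comm_ring_1) mpoly set" where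
  "HI Q = ideal_gen (polys_in Q) (H_Q Q)"

lemma keys_msum: "KS (\<Sum>i\<in>S. SG (f i) (1::nat)) \<subseteq> f ` S"
proof -
  have "KS (\<Sum>i\<in>S. SG (f i) (1::nat)) \<subseteq> (\<Union>i\<in>S. KS (SG (f i) (1::nat)))" by (rule keys_sum)
  also have "\<dots> \<subseteq> f ` S" by (rule UN_least) simp
  finally show ?thesis .
qed

lemma H_Q_sub: "H_Q Q \<subseteq> (polys_in Q :: (nat \<times> nat, 'k::comm_ring_1) mpoly set)"
proof
  fix x :: "(nat \<times> nat, 'k) mpoly" assume "x \<in> H_Q Q"
  then obtain js ks where c: "induced_cycle Q js ks" "x = cycle_binomial js ks" unfolding H_Q_def by blast
  define l where "l = length js"
  have lk: "length ks = l" and e1: "\<And>i. i < l \<Longrightarrow> (js ! i, ks ! i) \<in> Q"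
    and e2: "\<And>i. i < l \<Longrightarrow> (js ! ((i + 1) mod l), ks ! i) \<in> Q"
    using c(1) unfolding induced_cycle_def l_def Let_def by blast+
  have k1: "KS (\<Sum>i<l. SG (js ! i, ks ! i) (1::nat)) \<subseteq> Q"
    using keys_msum[of "\<lambda>i. (js ! i, ks ! i)" "{..<l}"] e1 by blast
  have k2: "KS (\<Sum>i<l. SG (js ! ((i + 1) mod l), ks ! i) (1::nat)) \<subseteq> Q"
    using keys_msum[of "\<lambda>i. (js ! ((i + 1) mod l), ks ! i)" "{..<l}"] e2 by blast
  have "x = SG (\<Sum>i<l. SG (js ! i, ks ! i) 1) 1 - SG (\<Sum>i<l. SG (js ! ((i + 1) mod l), ks ! i) 1) 1"
    using c(2) unfolding cycle_binomial_def l_def Let_def by simp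
  then show "x \<in> polys_in Q" using k1 k2 by (simp add: polys_in_diff polys_in_single)
qed

lemma HI_ideal: "is_ideal_in (polys_in Q) (HI Q :: (nat \<times> nat, 'k::comm_ring_1) mpoly set)"
  unfolding HI_def by (rule ideal_gen_ideal[OF H_Q_sub])

lemma bin_mult:
  assumes "(bin a b :: (nat \<times> nat, 'k::comm_ring_1) mpoly) \<in> HI Q" "KS c \<subseteq> Q"
  shows "(bin (c + a) (c + b) :: (nat \<times> nat, 'k) mpoly) \<in> HI Q"
proof -
  have "SG c 1 * bin a b = (bin (c + a) (c + b) :: (nat \<times> nat, 'k) mpoly)"
    by (simp add: bin_def right_diff_distrib mult_single)
  then show ?thesis using ideal_mult[OF HI_ideal polys_in_single[OF assms(2), of 1] assms(1)] by simp
qed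

lemma bin_trans:
  assumes "(bin a b :: (nat \<times> nat, 'k::comm_ring_1) mpoly) \<in> HI Q" "(bin b c :: (nat \<times> nat, 'k) mpoly) \<in> HI Q"
  shows "(bin a c :: (nat \<times> nat, 'k) mpoly) \<in> HI Q"
proof -
  have "bin a c = (bin a b + bin b c :: (nat \<times> nat, 'k) mpoly)" by (simp add: bin_def)
  then show ?thesis using ideal_add[OF HI_ideal assms] by simp
qed

lemma bin_refl: "(bin a a :: (nat \<times> nat, 'k::comm_ring_1) mpoly) \<in> HI Q"
  using ideal_zero[OF HI_ideal] by (simp add: bin_def)

lemma le_decomp:
  fixes a c :: "'v \<Rightarrow>\<^sub>0 nat"
  assumes "\<And>v. LK c v \<le> LK a v"
  shows "a = c + (a - c)"
  by (rule poly_mapping_eqI) (simp add: lookup_add lookup_minus assms)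

lemma mdeg_mon_phi: "mdeg (mon_phi a) = 2 * mdeg a"
  by (rule addfun_eqI[where f = "\<lambda>a. mdeg (mon_phi a)" and g = "\<lambda>a. 2 * mdeg a"])
     (simp_all add: mon_phi_add mdeg_add mon_phi_single)

lemma lookup_sum_when: "finite A \<Longrightarrow> (\<Sum>x\<in>A. (g x when P x)) = (\<Sum>x\<in>{x\<in>A. P x}. g x)"
  by (simp add: when_def sum.inter_filter)

lemma lookup_mon_phi_Inr: "LK (mon_phi a) (Inr k) = (\<Sum>p\<in>{p\<in>KS a. snd p = k}. LK a p)"
proof -
  have "LK (mon_phi a) (Inr k) = (\<Sum>p\<in>KS a. (LK a p when snd p = k))"
    unfolding mon_phi_def lookup_sum by (intro sum.cong) (simp_all add: lookup_add lookup_single when_def)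
  then show ?thesis by (simp add: lookup_sum_when)
qed

lemma lookup_mon_phi_Inl: "LK (mon_phi a) (Inl j) = (\<Sum>p\<in>{p\<in>KS a. fst p = j}. LK a p)"
proof -
  have "LK (mon_phi a) (Inl j) = (\<Sum>p\<in>KS a. (LK a p when fst p = j))"
    unfolding mon_phi_def lookup_sum by (intro sum.cong) (simp_all add: lookup_add lookup_single when_def)
  then show ?thesis by (simp add: lookup_sum_when)
qed

lemma sum_pos_iff: "finite S \<Longrightarrow> (\<forall>p\<in>S. (g p :: nat) > 0) \<Longrightarrow> (\<Sum>p\<in>S. g p) > 0 \<longleftrightarrow> S \<noteq> {}"
proof -
  assume fin: "finite S" and pos: "\<forall>p\<in>S. (g p :: nat) > 0"
  show ?thesis
  proof
    assume "(\<Sum>p\<in>S. g p) > 0" then show "S \<noteq> {}" by auto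
  next
    assume "S \<noteq> {}"
    then obtain p where p: "p \<in> S" by blast
    have "g p \<le> (\<Sum>p\<in>S. g p)" by (rule member_le_sum[OF p _ fin]) simp
    then show "(\<Sum>p\<in>S. g p) > 0" using pos p by (meson less_le_trans)
  qed
qed

lemma phi_Inr_pos: "LK (mon_phi a) (Inr k) > 0 \<longleftrightarrow> (\<exists>j. (j, k) \<in> KS a)"
proof -
  have "LK (mon_phi a) (Inr k) > 0 \<longleftrightarrow> {p\<in>KS a. snd p = k} \<noteq> {}"
    unfolding lookup_mon_phi_Inr
    by (rule sum_pos_iff) (simp, metis (mono_tags) in_keys_iff mem_Collect_eq not_gr0)
  also have "\<dots> \<longleftrightarrow> (\<exists>j. (j, k) \<in> KS a)"
  proof
    assume "{p\<in>KS a. snd p = k} \<noteq> {}"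
    then obtain p where "p \<in> KS a" "snd p = k" by blast
    then show "\<exists>j. (j, k) \<in> KS a" by (metis prod.collapse)
  next
    assume "\<exists>j. (j, k) \<in> KS a"
    then obtain j where "(j, k) \<in> KS a" by blast
    then have "(j, k) \<in> {p\<in>KS a. snd p = k}" by simp
    then show "{p\<in>KS a. snd p = k} \<noteq> {}" by blast
  qed
  finally show ?thesis .
qed

lemma phi_Inl_pos: "LK (mon_phi a) (Inl j) > 0 \<longleftrightarrow> (\<exists>k. (j, k) \<in> KS a)"
proof -
  have "LK (mon_phi a) (Inl j) > 0 \<longleftrightarrow> {p\<in>KS a. fst p = j} \<noteq> {}"
    unfolding lookup_mon_phi_Inl
    by (rule sum_pos_iff) (simp, metis (mono_tags) in_keys_iff mem_Collect_eq not_gr0)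
  also have "\<dots> \<longleftrightarrow> (\<exists>k. (j, k) \<in> KS a)"
  proof
    assume "{p\<in>KS a. fst p = j} \<noteq> {}"
    then obtain p where "p \<in> KS a" "fst p = j" by blast
    then show "\<exists>k. (j, k) \<in> KS a" by (metis prod.collapse)
  next
    assume "\<exists>k. (j, k) \<in> KS a"
    then obtain k where "(j, k) \<in> KS a" by blast
    then have "(j, k) \<in> {p\<in>KS a. fst p = j}" by simp
    then show "{p\<in>KS a. fst p = j} \<noteq> {}" by blast
  qed
  finally show ?thesis .
qed

lemma phi_msum:
  "mon_phi (\<Sum>i\<in>S. SG (f i) 1) = (\<Sum>i\<in>S. SG (Inl (fst (f i))) 1) + (\<Sum>i\<in>S. SG (Inr (snd (f i))) 1)"
  by (simp add: addfun_sum[where f = mon_phi, OF mon_phi_add mon_phi_zero] mon_phi_single sum.distrib)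

lemma lookup_msum_ge:
  assumes "finite S" "i \<in> S" "f i = v"
  shows "LK (\<Sum>i\<in>S. SG (f i) (1::nat)) v \<ge> 1"
proof -
  have "LK (\<Sum>i\<in>S. SG (f i) (1::nat)) v = (\<Sum>i\<in>S. (1 when f i = v))"
    by (simp add: lookup_sum lookup_single)
  also have "\<dots> \<ge> (1 when f i = v)" by (rule member_le_sum) (use assms in simp_all)
  finally show ?thesis using assms by simp
qed

lemma lookup_msum_inj:
  assumes "inj_on f S" "finite S"
  shows "LK (\<Sum>i\<in>S. SG (f i) (1::nat)) v = (if v \<in> f ` S then 1 else 0)"
proof -
  have "LK (\<Sum>i\<in>S. SG (f i) (1::nat)) v = (\<Sum>i\<in>S. (1 when f i = v))"
    by (simp add: lookup_sum lookup_single)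
  also have "\<dots> = card {i\<in>S. f i = v}" by (simp add: lookup_sum_when assms)
  also have "\<dots> = (if v \<in> f ` S then 1 else 0)"
  proof (cases "v \<in> f ` S")
    case True
    then obtain i where i: "i \<in> S" "f i = v" by blast
    then have "{i\<in>S. f i = v} = {i}" using assms(1) unfolding inj_on_def by blast
    then show ?thesis using True by simp
  next
    case False
    then have "{i\<in>S. f i = v} = {}" by blast
    then show ?thesis using False by (metis card.empty)
  qed
  finally show ?thesis .
qed

lemma mdeg_msum: "finite S \<Longrightarrow> mdeg (\<Sum>i\<in>S. SG (f i) (1::nat)) = card S"
  by (simp add: addfun_sum[where f = mdeg, OF mdeg_add mdeg_zero])

lemma rot_inj:
  assumes "x < l" "y < l" "(x + p) mod l = (y + p) mod (l::nat)"
  shows "x = y"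
proof (rule ccontr)
  assume ne: "x \<noteq> y"
  have key: "(x + p) mod l \<noteq> (y + p) mod l" if "x < l" "y < l" "x < y" for x y
  proof
    assume "(x + p) mod l = (y + p) mod l"
    then have "(y + p) mod l = (x + p) mod l" by simp
    then have "l dvd (y + p) - (x + p)" using mod_eq_dvd_iff_nat[of "x + p" "y + p" l] that(3) by simp
    then have "l dvd y - x" by simp
    then have "l \<le> y - x" using that(3) by (simp add: dvd_imp_le)
    then show False using that(2) by simp
  qed
  from ne have "x < y \<or> y < x" by arith
  then show False
  proof
    assume "x < y" then show False using key[of x y] assms by simp
  next
    assume "y < x" then show False using key[of y x] assms by simp
  qed
qed

lemma bij_rot: "(l::nat) > 0 \<Longrightarrow> bij_betw (\<lambda>i. (i + p) mod l) {..<l} {..<l}"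
proof -
  assume l: "l > 0"
  have inj: "inj_on (\<lambda>i. (i + p) mod l) {..<l}"
  proof (rule inj_onI)
    fix x y :: nat assume "x \<in> {..<l}" "y \<in> {..<l}" "(x + p) mod l = (y + p) mod l"
    then show "x = y" using rot_inj[of x l y p] by simp
  qed
  have "(\<lambda>i. (i + p) mod l) ` {..<l} \<subseteq> {..<l}" using l by (simp add: image_subset_iff)
  moreover have "card ((\<lambda>i. (i + p) mod l) ` {..<l}) = card {..<l}" using card_image[OF inj] by simp
  ultimately have "(\<lambda>i. (i + p) mod l) ` {..<l} = {..<l}" by (simp add: card_subset_eq)
  then show ?thesis using inj by (simp add: bij_betw_def)
qed

lemma sum_rot:
  assumes "(l::nat) > 0"
  shows "(\<Sum>i<l. g ((i + p) mod l)) = (\<Sum>i<l. g i)"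
  using sum.reindex_bij_betw[OF bij_rot[OF assms, of p], of g] by simp


lemma keys_minus_nat: "KS (a - c) \<subseteq> KS (a :: 'v \<Rightarrow>\<^sub>0 nat)"
proof
  fix u assume "u \<in> KS (a - c)"
  then have "LK a u - LK c u \<noteq> 0" by (simp add: in_keys_iff lookup_minus)
  then show "u \<in> KS a" by (simp add: in_keys_iff)
qed

lemma share_step:
  assumes IH: "\<And>x y. mdeg x < d \<Longrightarrow> KS x \<subseteq> Q \<Longrightarrow> KS y \<subseteq> Q \<Longrightarrow> mon_phi x = mon_phi y
      \<Longrightarrow> (bin x y :: (nat \<times> nat, 'k::comm_ring_1) mpoly) \<in> HI Q"
    and d: "mdeg a = d" and aQ: "KS a \<subseteq> Q" and bQ: "KS b \<subseteq> Q" and ph: "mon_phi a = mon_phi b"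
    and va: "LK a v > 0" and vb: "LK b v > 0"
  shows "(bin a b :: (nat \<times> nat, 'k) mpoly) \<in> HI Q"
proof -
  let ?c = "SG v 1 :: nat \<times> nat \<Rightarrow>\<^sub>0 nat"
  have "\<And>u. LK ?c u \<le> LK a u" using va by (simp add: lookup_single when_def, metis Suc_leI)
  then have a: "a = ?c + (a - ?c)" by (rule le_decomp)
  have "\<And>u. LK ?c u \<le> LK b u" using vb by (simp add: lookup_single when_def, metis Suc_leI)
  then have b: "b = ?c + (b - ?c)" by (rule le_decomp)
  have "mon_phi ?c + mon_phi (a - ?c) = mon_phi ?c + mon_phi (b - ?c)"
    using ph a b mon_phi_add by metis
  then have ph': "mon_phi (a - ?c) = mon_phi (b - ?c)" by simp
  have "mdeg a = 1 + mdeg (a - ?c)" using a mdeg_add[of ?c "a - ?c"] by simp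
  then have deg: "mdeg (a - ?c) < d" using d by simp
  have k1: "KS (a - ?c) \<subseteq> Q" using keys_minus_nat[of a ?c] aQ by blast
  have k2: "KS (b - ?c) \<subseteq> Q" using keys_minus_nat[of b ?c] bQ by blast
  have "v \<in> KS a" using va by (simp add: in_keys_iff)
  then have "v \<in> Q" using aQ by blast
  then have vQ: "KS ?c \<subseteq> Q" by simp
  have "(bin (a - ?c) (b - ?c) :: (nat \<times> nat, 'k) mpoly) \<in> HI Q" by (rule IH[OF deg k1 k2 ph'])
  from bin_mult[OF this vQ] show ?thesis using a b by simp
qed

lemma chord_step:
  fixes J K :: "nat \<Rightarrow> nat" and l q :: nat
  assumes IH: "\<And>x y. mdeg x < l \<Longrightarrow> KS x \<subseteq> Q \<Longrightarrow> KS y \<subseteq> Q \<Longrightarrow> mon_phi x = mon_phi y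
      \<Longrightarrow> (bin x y :: (nat \<times> nat, 'k::comm_ring_1) mpoly) \<in> HI Q"
    and eA: "\<And>i. i < l \<Longrightarrow> (J i, K i) \<in> Q"
    and eB: "\<And>i. i < l \<Longrightarrow> (J (Suc i mod l), K i) \<in> Q"
    and q: "0 < q" "q < l - 1" and ch: "(J 0, K q) \<in> Q"
  shows "(bin (\<Sum>i<l. SG (J i, K i) 1) (\<Sum>i<l. SG (J (Suc i mod l), K i) 1) :: (nat \<times> nat, 'k) mpoly) \<in> HI Q"
proof -
  define Ca where "Ca = (\<Sum>i<l. SG (J i, K i) (1::nat))"
  define Cb where "Cb = (\<Sum>i<l. SG (J (Suc i mod l), K i) (1::nat))"
  define m1 where "m1 = (\<Sum>i<q. SG (J (Suc i), K i) (1::nat))"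
  define m3 where "m3 = (\<Sum>i\<in>{Suc q..<l}. SG (J i, K i) (1::nat))"
  define m where "m = m1 + SG (J 0, K q) 1 + m3"
  have l2: "l \<ge> 2" using q by simp
  have kCa: "KS Ca \<subseteq> Q" unfolding Ca_def using keys_msum[of "\<lambda>i. (J i, K i)" "{..<l}"] eA by blast
  have kCb: "KS Cb \<subseteq> Q" unfolding Cb_def using keys_msum[of "\<lambda>i. (J (Suc i mod l), K i)" "{..<l}"] eB by blast
  have k1: "KS m1 \<subseteq> Q"
  proof -
    have "(J (Suc i), K i) \<in> Q" if "i < q" for i
    proof -
      have "Suc i < l" using that q by arith
      then show ?thesis using eB[of i] by simp
    qed
    then show ?thesis unfolding m1_def using keys_msum[of "\<lambda>i. (J (Suc i), K i)" "{..<q}"] by blast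
  qed
  have "(\<lambda>i. (J i, K i)) ` {Suc q..<l} \<subseteq> Q" using eA by (simp add: image_subset_iff)
  then have k3: "KS m3 \<subseteq> Q" unfolding m3_def using keys_msum[of "\<lambda>i. (J i, K i)" "{Suc q..<l}"] by blast
  have km: "KS m \<subseteq> Q" unfolding m_def using k1 k3 ch by (simp add: keys_add_mon)
  have degCa: "mdeg Ca = l" unfolding Ca_def using mdeg_msum[of "{..<l}" "\<lambda>i. (J i, K i)"] by simp
  have degm: "mdeg m = l" unfolding m_def m1_def m3_def
    using q mdeg_msum[of "{..<q}" "\<lambda>i. (J (Suc i), K i)"] mdeg_msum[of "{Suc q..<l}" "\<lambda>i. (J i, K i)"]
    by (simp add: mdeg_add)
  let ?X = "\<lambda>j. SG (Inl j) (1::nat) :: nat + nat \<Rightarrow>\<^sub>0 nat"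
  let ?Y = "\<lambda>k. SG (Inr k) (1::nat) :: nat + nat \<Rightarrow>\<^sub>0 nat"
  have split: "(\<Sum>i<l. f i) = (\<Sum>i<Suc q. f i) + (\<Sum>i\<in>{Suc q..<l}. f i)" for f :: "nat \<Rightarrow> nat + nat \<Rightarrow>\<^sub>0 nat"
    using sum.atLeastLessThan_concat[of 0 "Suc q" l f] q by (simp add: atLeast0LessThan)
  have phCa: "mon_phi Ca = (\<Sum>i<l. ?X (J i)) + (\<Sum>i<l. ?Y (K i))"
    unfolding Ca_def phi_msum by simp
  have phCb: "mon_phi Cb = (\<Sum>i<l. ?X (J i)) + (\<Sum>i<l. ?Y (K i))"
  proof -
    have "mon_phi Cb = (\<Sum>i<l. ?X (J (Suc i mod l))) + (\<Sum>i<l. ?Y (K i))"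
      unfolding Cb_def phi_msum by simp
    moreover have "(\<Sum>i<l. ?X (J (Suc i mod l))) = (\<Sum>i<l. ?X (J i))"
      using sum_rot[of l "\<lambda>i. ?X (J i)" 1] l2 by simp
    ultimately show ?thesis by simp
  qed
  have phm: "mon_phi m = (\<Sum>i<l. ?X (J i)) + (\<Sum>i<l. ?Y (K i))"
  proof -
    have "mon_phi m = ((\<Sum>i<q. ?X (J (Suc i))) + (\<Sum>i<q. ?Y (K i))) + (?X (J 0) + ?Y (K q))
        + ((\<Sum>i\<in>{Suc q..<l}. ?X (J i)) + (\<Sum>i\<in>{Suc q..<l}. ?Y (K i)))"
      unfolding m_def m1_def m3_def mon_phi_add phi_msum mon_phi_single by simp
    also have "\<dots> = ((?X (J 0) + (\<Sum>i<q. ?X (J (Suc i)))) + (\<Sum>i\<in>{Suc q..<l}. ?X (J i)))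
        + (((\<Sum>i<q. ?Y (K i)) + ?Y (K q)) + (\<Sum>i\<in>{Suc q..<l}. ?Y (K i)))"
      by (simp add: ac_simps)
    also have "\<dots> = ((\<Sum>i<Suc q. ?X (J i)) + (\<Sum>i\<in>{Suc q..<l}. ?X (J i)))
        + ((\<Sum>i<Suc q. ?Y (K i)) + (\<Sum>i\<in>{Suc q..<l}. ?Y (K i)))"
      by (simp only: sum.lessThan_Suc_shift[where g = "\<lambda>i. ?X (J i)"] sum.lessThan_Suc[where g = "\<lambda>i. ?Y (K i)"])
    also have "\<dots> = (\<Sum>i<l. ?X (J i)) + (\<Sum>i<l. ?Y (K i))"
      by (simp only: split)
    finally show ?thesis .
  qed
  have s1a: "LK m (J (l - 1), K (l - 1)) > 0"
  proof -
    have "LK m3 (J (l - 1), K (l - 1)) \<ge> 1" unfolding m3_def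
      by (rule lookup_msum_ge[of _ "l - 1"]) (use q in simp_all)
    then show ?thesis unfolding m_def by (simp add: lookup_add)
  qed
  have s1b: "LK Ca (J (l - 1), K (l - 1)) > 0"
  proof -
    have "LK Ca (J (l - 1), K (l - 1)) \<ge> 1" unfolding Ca_def
      by (rule lookup_msum_ge[of _ "l - 1"]) (use q in simp_all)
    then show ?thesis by simp
  qed
  have s2a: "LK m (J 1, K 0) > 0"
  proof -
    have "LK m1 (J 1, K 0) \<ge> 1" unfolding m1_def
      by (rule lookup_msum_ge[of _ 0]) (use q in simp_all)
    then show ?thesis unfolding m_def by (simp add: lookup_add)
  qed
  have s2b: "LK Cb (J 1, K 0) > 0"
  proof -
    have "LK Cb (J 1, K 0) \<ge> 1" unfolding Cb_def
      by (rule lookup_msum_ge[of _ 0]) (use l2 in simp_all)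
    then show ?thesis by simp
  qed
  have e1: "mon_phi Ca = mon_phi m" using phCa phm by simp
  have e2: "mon_phi m = mon_phi Cb" using phCb phm by simp
  have b1: "(bin Ca m :: (nat \<times> nat, 'k) mpoly) \<in> HI Q"
    by (rule share_step[OF IH degCa kCa km e1 s1b s1a])
  have b2: "(bin m Cb :: (nat \<times> nat, 'k) mpoly) \<in> HI Q"
    by (rule share_step[OF IH degm km kCb e2 s2a s2b])
  show ?thesis using bin_trans[OF b1 b2] by (simp add: Ca_def Cb_def)
qed

lemma chord_index:
  fixes p q l :: nat
  assumes "p < l" "q < l" "p \<noteq> q" "p \<noteq> (q + 1) mod l"
  shows "0 < (q + (l - p)) mod l \<and> (q + (l - p)) mod l < l - 1 \<and> ((q + (l - p)) mod l + p) mod l = q"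
proof (cases "q < p")
  case True
  have q1: "(q + 1) mod l = q + 1" using True assms(1) by simp
  then have "q + 1 < p" using True assms(4) by simp
  have eq: "(q + (l - p)) mod l = q + (l - p)" using True assms(1) by simp
  have "(q + (l - p) + p) mod l = q" using True assms by simp
  then show ?thesis using eq \<open>q + 1 < p\<close> assms(1) by simp
next
  case False
  then have qp: "p < q" using assms(3) by simp
  have e1: "q + (l - p) = (q - p) + l" using qp assms(1) by simp
  have "q - p < l" using qp assms(2) by simp
  then have e2: "((q - p) + l) mod l = q - p" by (simp only: mod_add_self2 mod_less)
  have eq: "(q + (l - p)) mod l = q - p" using e1 e2 by metis
  have ne: "q - p \<noteq> l - 1"
  proof
    assume "q - p = l - 1"
    then have "p = 0" "q = l - 1" using assms(2) qp by arith+
    then show False using assms(4) assms(1) by simp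
  qed
  show ?thesis using eq ne qp assms(1,2) by simp
qed

lemma map_upt_nth: "i < l \<Longrightarrow> map f [0..<l] ! i = f i"
  by simp

lemma distinct_map_upt: "distinct (map f [0..<l]) \<longleftrightarrow> inj_on f {..<l}"
  by (simp add: distinct_map atLeast0LessThan)

theorem toric:
  assumes "KS a \<subseteq> Q" "KS b \<subseteq> Q" "mon_phi a = mon_phi b"
  shows "(bin a b :: (nat \<times> nat, 'k::comm_ring_1) mpoly) \<in> HI Q"
  using assms
proof (induction "mdeg a" arbitrary: a b rule: less_induct)
  case less
  have IH: "\<And>x y. mdeg x < mdeg a \<Longrightarrow> KS x \<subseteq> Q \<Longrightarrow> KS y \<subseteq> Q \<Longrightarrow> mon_phi x = mon_phi y
      \<Longrightarrow> (bin x y :: (nat \<times> nat, 'k) mpoly) \<in> HI Q"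
    using less.hyps by blast
  have aQ: "KS a \<subseteq> Q" and bQ: "KS b \<subseteq> Q" and ph: "mon_phi a = mon_phi b" using less.prems by auto
  have degb: "mdeg b = mdeg a" using mdeg_mon_phi[of a] mdeg_mon_phi[of b] ph by simp
  show ?case
  proof (cases "\<exists>v. LK a v > 0 \<and> LK b v > 0")
    case True
    then obtain v where "LK a v > 0" "LK b v > 0" by blast
    then show ?thesis using share_step[OF IH refl aQ bQ ph] by blast
  next
    case False
    then have disj: "KS a \<inter> KS b = {}" by (auto simp: in_keys_iff simp del: lookup_not_eq_zero_eq_in_keys)
    show ?thesis
    proof (cases "a = 0")
      case True
      then have "mdeg b = 0" using degb by simp
      then have "b = 0" by (simp add: mdeg_eq_0)
      then show ?thesis using True bin_refl by simp
    next
      case anz: False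
      then have "KS a \<noteq> {}" by simp
      then obtain x0 where x0: "x0 \<in> KS a" by blast
      have hA: "\<exists>j'. (j', k) \<in> KS b" if "(j, k) \<in> KS a" for j k
        using phi_Inr_pos[of a k] phi_Inr_pos[of b k] ph that by auto
      have hB: "\<exists>k'. (j, k') \<in> KS a" if "(j, k) \<in> KS b" for j k
        using phi_Inl_pos[of a j] phi_Inl_pos[of b j] ph that by auto
      have "\<exists>l J K. cwalk (KS a) (KS b) l J K"
        by (rule walk_exists[of "KS a" x0 "KS b"]) (use x0 hA hB in auto)
      from simple_cycle_exists[OF this disj]
      obtain l J K where cw: "cwalk (KS a) (KS b) l J K" and injJ: "inj_on J {..<l}"
          and injK: "inj_on K {..<l}" and l2: "l \<ge> 2"
        by blast
      have wA: "\<And>i. i < l \<Longrightarrow> (J i, K i) \<in> KS a" and wB: "\<And>i. i < l \<Longrightarrow> (J (Suc i mod l), K i) \<in> KS b"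
        using cw by (simp_all add: cwalk_def)
      define Ca where "Ca = (\<Sum>i<l. SG (J i, K i) (1::nat))"
      define Cb where "Cb = (\<Sum>i<l. SG (J (Suc i mod l), K i) (1::nat))"
      have injA: "inj_on (\<lambda>i. (J i, K i)) {..<l}" using injJ by (auto simp: inj_on_def)
      have injB: "inj_on (\<lambda>i. (J (Suc i mod l), K i)) {..<l}" using injK by (auto simp: inj_on_def)
      have Ca_le: "LK Ca u \<le> LK a u" for u
      proof (cases "u \<in> (\<lambda>i. (J i, K i)) ` {..<l}")
        case True
        then have "u \<in> KS a" using wA by blast
        then show ?thesis unfolding Ca_def lookup_msum_inj[OF injA finite_lessThan] using True
          by (simp add: in_keys_iff Suc_leI)
      next
        case False
        then show ?thesis unfolding Ca_def lookup_msum_inj[OF injA finite_lessThan] by simp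
      qed
      have Cb_le: "LK Cb u \<le> LK b u" for u
      proof (cases "u \<in> (\<lambda>i. (J (Suc i mod l), K i)) ` {..<l}")
        case True
        then have "u \<in> KS b" using wB by blast
        then show ?thesis unfolding Cb_def lookup_msum_inj[OF injB finite_lessThan] using True
          by (simp add: in_keys_iff Suc_leI)
      next
        case False
        then show ?thesis unfolding Cb_def lookup_msum_inj[OF injB finite_lessThan] by simp
      qed
      define a2 where "a2 = a - Ca"
      define b2 where "b2 = b - Cb"
      have adec: "a = Ca + a2" unfolding a2_def by (rule le_decomp[OF Ca_le])
      have bdec: "b = Cb + b2" unfolding b2_def by (rule le_decomp[OF Cb_le])
      have phC: "mon_phi Ca = mon_phi Cb"
      proof -
        have rr: "(\<Sum>i<l. SG (Inl (J (Suc i mod l))) (Suc 0)) = (\<Sum>i<l. SG (Inl (J i)) (Suc 0))"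
          using sum_rot[of l "\<lambda>i. SG (Inl (J i)) (Suc 0)" 1] l2 by simp
        show ?thesis unfolding Ca_def Cb_def phi_msum by (simp, rule rr[symmetric])
      qed
      have ph2: "mon_phi a2 = mon_phi b2"
      proof -
        have "mon_phi Ca + mon_phi a2 = mon_phi Cb + mon_phi b2"
          using ph adec bdec mon_phi_add by metis
        then show ?thesis using phC by simp
      qed
      have degCa: "mdeg Ca = l" unfolding Ca_def using mdeg_msum[of "{..<l}" "\<lambda>i. (J i, K i)"] by simp
      have degCb: "mdeg Cb = l" unfolding Cb_def using mdeg_msum[of "{..<l}" "\<lambda>i. (J (Suc i mod l), K i)"] by simp
      have kCa: "KS Ca \<subseteq> Q" unfolding Ca_def using keys_msum[of "\<lambda>i. (J i, K i)" "{..<l}"] wA aQ by blast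
      have kCb: "KS Cb \<subseteq> Q" unfolding Cb_def using keys_msum[of "\<lambda>i. (J (Suc i mod l), K i)" "{..<l}"] wB bQ by blast
      have ka2: "KS a2 \<subseteq> Q" unfolding a2_def using keys_minus_nat[of a Ca] aQ by blast
      have kb2: "KS b2 \<subseteq> Q" unfolding b2_def using keys_minus_nat[of b Cb] bQ by blast
      have dega: "mdeg a = l + mdeg a2" using adec degCa by (metis mdeg_add)
      show ?thesis
      proof (cases "a2 = 0")
        case False
        then have "mdeg a2 > 0" using mdeg_eq_0 by blast
        then have lt1: "mdeg Ca < mdeg a" and lt2: "mdeg a2 < mdeg a" using dega degCa l2 by simp_all
        have "(bin Ca Cb :: (nat \<times> nat, 'k) mpoly) \<in> HI Q" by (rule IH[OF lt1 kCa kCb phC])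
        from bin_mult[OF this ka2] have h1: "(bin (a2 + Ca) (a2 + Cb) :: (nat \<times> nat, 'k) mpoly) \<in> HI Q" .
        have "(bin a2 b2 :: (nat \<times> nat, 'k) mpoly) \<in> HI Q" by (rule IH[OF lt2 ka2 kb2 ph2])
        from bin_mult[OF this kCb] have h2: "(bin (Cb + a2) (Cb + b2) :: (nat \<times> nat, 'k) mpoly) \<in> HI Q" .
        have "(bin (a2 + Ca) (Cb + b2) :: (nat \<times> nat, 'k) mpoly) \<in> HI Q"
          using bin_trans[OF h1] h2 by (simp add: add.commute)
        then show ?thesis using adec bdec by (simp add: add.commute)
      next
        case True
        then have aC: "a = Ca" using adec by simp
        have "mdeg b2 = 0" using bdec degb dega degCb True by (simp add: mdeg_add)
        then have bC: "b = Cb" using bdec by (simp add: mdeg_eq_0)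
        define js where "js = map J [0..<l]"
        define ks where "ks = map K [0..<l]"
        have ljs: "length js = l" "length ks = l" by (simp_all add: js_def ks_def)
        have njs: "\<And>i. i < l \<Longrightarrow> js ! i = J i" "\<And>i. i < l \<Longrightarrow> ks ! i = K i" by (simp_all add: js_def ks_def)
        have djs: "distinct js" "distinct ks" using injJ injK by (simp_all add: js_def ks_def distinct_map_upt)
        have eQ1: "\<And>i. i < l \<Longrightarrow> (J i, K i) \<in> Q" using wA aQ by blast
        have eQ2: "\<And>i. i < l \<Longrightarrow> (J (Suc i mod l), K i) \<in> Q" using wB bQ by blast
        have cbin: "cycle_binomial js ks = (bin Ca Cb :: (nat \<times> nat, 'k) mpoly)"
        proof -
          have s1: "(\<Sum>i<l. SG (js ! i, ks ! i) (1::nat)) = Ca" unfolding Ca_def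
            by (rule sum.cong) (simp_all add: njs)
          have s2: "(\<Sum>i<l. SG (js ! ((i + 1) mod l), ks ! i) (1::nat)) = Cb" unfolding Cb_def
          proof (rule sum.cong)
            fix i assume "i \<in> {..<l}"
            then have "i < l" "Suc i mod l < l" using l2 by simp_all
            then show "SG (js ! ((i + 1) mod l), ks ! i) 1 = SG (J (Suc i mod l), K i) 1"
              by (simp add: njs)
          qed simp
          show ?thesis unfolding cycle_binomial_def Let_def ljs bin_def s1 s2 ..
        qed
        show ?thesis
        proof (cases "induced_cycle Q js ks")
          case True
          then have "cycle_binomial js ks \<in> (H_Q Q :: (nat \<times> nat, 'k) mpoly set)" unfolding H_Q_def by blast
          then have "cycle_binomial js ks \<in> (HI Q :: (nat \<times> nat, 'k) mpoly set)"
            unfolding HI_def using ideal_gen_sub by blast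
          then show ?thesis using cbin aC bC by simp
        next
          case False
          have edges: "\<forall>i<l. (js ! i, ks ! i) \<in> Q \<and> (js ! ((i + 1) mod l), ks ! i) \<in> Q"
          proof (intro allI impI conjI)
            fix i assume i: "i < l"
            show "(js ! i, ks ! i) \<in> Q" using eQ1[OF i] njs i by simp
            have "Suc i mod l < l" using l2 by simp
            then show "(js ! ((i + 1) mod l), ks ! i) \<in> Q" using eQ2[OF i] njs i by simp
          qed
          have "\<not> (\<forall>a<l. \<forall>b<l. (js ! a, ks ! b) \<in> Q \<longrightarrow> a = b \<or> a = (b + 1) mod l)"
            using False edges ljs djs l2 unfolding induced_cycle_def Let_def by (simp, blast)
          then obtain p q where pq: "p < l" "q < l" "(J p, K q) \<in> Q" "p \<noteq> q" "p \<noteq> (q + 1) mod l"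
            using njs by auto
          define q' where "q' = (q + (l - p)) mod l"
          have q'p: "0 < q'" "q' < l - 1" "(q' + p) mod l = q"
            using chord_index[OF pq(1,2,4,5)] unfolding q'_def by auto
          define J' where "J' i = J ((i + p) mod l)" for i
          define K' where "K' i = K ((i + p) mod l)" for i
          have lpos: "l > 0" using l2 by simp
          have rotS: "(Suc i mod l + p) mod l = Suc ((i + p) mod l) mod l" for i
            by (simp add: mod_add_left_eq mod_Suc_eq)
          have eA': "(J' i, K' i) \<in> Q" if "i < l" for i
            unfolding J'_def K'_def using eQ1[of "(i + p) mod l"] lpos by simp
          have eB': "(J' (Suc i mod l), K' i) \<in> Q" if "i < l" for i
            unfolding J'_def K'_def rotS using eQ2[of "(i + p) mod l"] lpos by simp
          have ch': "(J' 0, K' q') \<in> Q" unfolding J'_def K'_def using q'p pq by simp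
          have Ca': "(\<Sum>i<l. SG (J' i, K' i) (1::nat)) = Ca"
            unfolding J'_def K'_def Ca_def using sum_rot[OF lpos, of "\<lambda>i. SG (J i, K i) (1::nat)" p] by simp
          have Cb': "(\<Sum>i<l. SG (J' (Suc i mod l), K' i) (1::nat)) = Cb"
            unfolding J'_def K'_def Cb_def rotS
            using sum_rot[OF lpos, of "\<lambda>i. SG (J (Suc i mod l), K i) (1::nat)" p] by simp
          have IH': "\<And>x y. mdeg x < l \<Longrightarrow> KS x \<subseteq> Q \<Longrightarrow> KS y \<subseteq> Q \<Longrightarrow> mon_phi x = mon_phi y
              \<Longrightarrow> (bin x y :: (nat \<times> nat, 'k) mpoly) \<in> HI Q"
            using IH dega True by simp
          have "(bin (\<Sum>i<l. SG (J' i, K' i) 1) (\<Sum>i<l. SG (J' (Suc i mod l), K' i) 1) :: (nat \<times> nat, 'k) mpoly) \<in> HI Q"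
            by (rule chord_step[OF IH' eA' eB' q'p(1,2) ch'])
          then show ?thesis using Ca' Cb' aC bC by simp
        qed
      qed
    qed
  qed
qed


lemma lookup_phi: "LK (phi f) \<mu> = (\<Sum>m\<in>{m\<in>KS f. mon_phi m = \<mu>}. LK f m)"
proof -
  have "LK (phi f) \<mu> = (\<Sum>m\<in>KS f. (LK f m when mon_phi m = \<mu>))"
    unfolding phi_def lookup_sum by (simp add: lookup_single)
  then show ?thesis by (simp add: lookup_sum_when)
qed

lemma phi_zero_HI:
  fixes f :: "(nat \<times> nat, 'k::comm_ring_1) mpoly"
  assumes "f \<in> polys_in Q" "phi f = 0"
  shows "f \<in> HI Q"
proof -
  have "\<forall>f :: (nat \<times> nat, 'k) mpoly. card (KS f) = n \<longrightarrow> f \<in> polys_in Q \<longrightarrow> phi f = 0 \<longrightarrow> f \<in> HI Q" for n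
  proof (induction n rule: less_induct)
    case (less n)
    show ?case
    proof (intro allI impI)
      fix f :: "(nat \<times> nat, 'k) mpoly"
      assume n: "card (KS f) = n" and fQ: "f \<in> polys_in Q" and ph: "phi f = 0"
      show "f \<in> HI Q"
      proof (cases "f = 0")
        case True
        then show ?thesis using ideal_zero[OF HI_ideal] by simp
      next
        case False
        then have "KS f \<noteq> {}" by simp
        then obtain m where m: "m \<in> KS f" by blast
        define c where "c = LK f m"
        have c0: "c \<noteq> 0" using m by (simp add: c_def in_keys_iff)
        have "\<exists>m'\<in>KS f. m' \<noteq> m \<and> mon_phi m' = mon_phi m"
        proof (rule ccontr)
          assume "\<not> ?thesis"
          then have "{m'\<in>KS f. mon_phi m' = mon_phi m} = {m}" using m by blast
          then have "LK (phi f) (mon_phi m) = c" by (simp add: lookup_phi c_def)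
          then show False using ph c0 by simp
        qed
        then obtain m' where m': "m' \<in> KS f" "m' \<noteq> m" "mon_phi m' = mon_phi m" by blast
        have mQ: "KS m \<subseteq> Q" "KS m' \<subseteq> Q" using fQ m m'(1) polys_inD by blast+
        define g where "g = (SG 0 c * bin m m' :: (nat \<times> nat, 'k) mpoly)"
        have g_eq: "g = SG m c - SG m' c" by (simp add: g_def bin_def right_diff_distrib mult_single)
        define f' where "f' = f - g"
        have bI: "(bin m m' :: (nat \<times> nat, 'k) mpoly) \<in> HI Q"
          by (rule toric[OF mQ(1) mQ(2) m'(3)[symmetric]])
        have gI: "g \<in> HI Q" unfolding g_def by (rule ideal_mult[OF HI_ideal scal_polys_in bI])
        have kf': "KS f' \<subseteq> KS f - {m}"
        proof
          fix v assume v: "v \<in> KS f'"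
          have "LK f' v = LK f v - (LK (SG m c) v - LK (SG m' c) v)" by (simp add: f'_def g_eq lookup_minus)
          moreover have "LK f' m = 0" using m'(2) by (simp add: f'_def g_eq lookup_minus c_def lookup_single)
          have "v \<noteq> m" using v \<open>LK f' m = 0\<close> by (metis in_keys_iff)
          moreover have "v \<in> KS f"
          proof (cases "v = m'")
            case True then show ?thesis using m'(1) by simp
          next
            case False
            then have "LK f' v = LK f v" using \<open>v \<noteq> m\<close> by (simp add: f'_def g_eq lookup_minus lookup_single when_def)
            then show ?thesis using v by (metis in_keys_iff)
          qed
          ultimately show "v \<in> KS f - {m}" by blast
        qed
        have card: "card (KS f') < n"
          using n m kf' by (metis card_Diff1_less finite_keys card_mono le_less_trans finite_Diff)
        have f'Q: "f' \<in> polys_in Q" unfolding f'_def g_eq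
          using fQ polys_in_single[OF mQ(1), of c] polys_in_single[OF mQ(2), of c] by (intro polys_in_diff)
        have "phi f' = 0" unfolding f'_def g_eq using ph m'(3) by (simp add: phi_diff phi_single)
        then have "f' \<in> HI Q" using less.IH card f'Q by blast
        moreover have "f = f' + g" by (simp add: f'_def)
        ultimately show ?thesis using ideal_add[OF HI_ideal _ gI] by simp
      qed
    qed
  qed
  then show ?thesis using assms by blast
qed


lemma init_top:
  assumes mu: "LK p \<mu> \<noteq> 0" and lt: "\<And>\<nu>. \<nu> \<in> KS p \<Longrightarrow> \<nu> \<noteq> \<mu> \<Longrightarrow> wdeg w \<nu> < wdeg w \<mu>"
  shows "init w p = SG \<mu> (LK p \<mu>)"
proof -
  have muk: "\<mu> \<in> KS p" using mu by (simp add: in_keys_iff)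
  have "MW w p = wdeg w \<mu>"
  proof (rule antisym)
    show "MW w p \<le> wdeg w \<mu>"
      by (rule MW_le) (use muk lt in \<open>auto simp: order_le_less\<close>)
    show "wdeg w \<mu> \<le> MW w p" by (rule MW_ge[OF muk])
  qed
  show ?thesis
  proof (rule poly_mapping_eqI)
    fix k
    show "LK (init w p) k = LK (SG \<mu> (LK p \<mu>)) k"
    proof (cases "k = \<mu>")
      case True then show ?thesis using \<open>MW w p = wdeg w \<mu>\<close> by (simp add: lookup_init)
    next
      case False
      have "LK (init w p) k = 0"
      proof (cases "k \<in> KS p")
        case True
        then have "wdeg w k \<noteq> MW w p" using lt[OF True False] \<open>MW w p = wdeg w \<mu>\<close> by simp
        then show ?thesis by (simp add: lookup_init)
      next
        case False
        then show ?thesis by (simp add: lookup_init not_in_keys_iff_lookup_eq_zero)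
      qed
      then show ?thesis using False by (simp add: lookup_single when_def)
    qed
  qed
qed

lemma sum_idx_Cons2:
  "(\<Sum>i<length (x # xs). f ((x # xs) ! i) ((y # ys) ! i)) = f x y + (\<Sum>i<length xs. f (xs ! i) (ys ! i))"
  unfolding length_Cons sum.lessThan_Suc_shift by simp

lemma xp_mon_phi: "xp (mon_phi n) = ren_mon fst n"
  by (rule addfun_eqI[where f = "\<lambda>n. xp (mon_phi n)" and g = "ren_mon fst"])
     (simp_all add: mon_phi_add xp_add ren_mon_add mon_phi_single xp_single ren_mon_single)

lemma yp_mon_phi: "yp (mon_phi n) = ren_mon snd n"
  by (rule addfun_eqI[where f = "\<lambda>n. yp (mon_phi n)" and g = "ren_mon snd"])
     (simp_all add: mon_phi_add yp_add ren_mon_add mon_phi_single yp_single ren_mon_single)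

locale liftside =
  fixes pr :: "nat \<Rightarrow> nat \<Rightarrow> nat \<times> nat" and pj oj :: "nat \<times> nat \<Rightarrow> nat"
    and tg tg' :: "nat \<Rightarrow> nat + nat" and w w' :: "nat \<Rightarrow> real" and wz :: "nat \<times> nat \<Rightarrow> real"
  assumes pj_pr: "\<And>u v. pj (pr u v) = u" and oj_pr: "\<And>u v. oj (pr u v) = v"
    and pr_pj: "\<And>p. pr (pj p) (oj p) = p"
    and wz_pr: "\<And>u v. wz (pr u v) = w u + w' v"
    and phi_pr: "\<And>u v n. mon_phi (SG (pr u v) n) = SG (tg u) n + SG (tg' v) n"
begin

definition lam where "lam ord ks m = (\<Sum>i<length ks. SG (pr (ord m ! i) (ks ! i)) (1::nat))"

definition Yk where "Yk ks = (\<Sum>i<length ks. SG (tg' (ks ! i)) (1::nat))"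

lemma lift_eq: "lift pr ord ks f = (\<Sum>m\<in>KS f. SG (lam ord ks m) (LK f m))"
  by (simp add: lift_def lam_def)

lemma wdeg_lam:
  assumes "mon_of_list (ord m) = m" "length (ord m) = length ks"
  shows "wdeg wz (lam ord ks m) = wdeg w m + (\<Sum>i<length ks. w' (ks ! i))"
proof -
  have "wdeg wz (lam ord ks m) = (\<Sum>i<length ks. w (ord m ! i) + w' (ks ! i))"
    unfolding lam_def by (simp add: addfun_sum[where f = "wdeg wz", OF wdeg_add wdeg_zero] wz_pr)
  also have "\<dots> = (\<Sum>i<length ks. w (ord m ! i)) + (\<Sum>i<length ks. w' (ks ! i))"
    by (simp add: sum.distrib)
  also have "(\<Sum>i<length ks. w (ord m ! i)) = wdeg w m"
    using addfun_mon_of_list[where f = "wdeg w", OF wdeg_add wdeg_zero, of "ord m"] assms by simp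
  finally show ?thesis .
qed

lemma phi_lam:
  assumes "mon_of_list (ord m) = m" "length (ord m) = length ks"
  shows "mon_phi (lam ord ks m) = ren_mon tg m + Yk ks"
proof -
  have "mon_phi (lam ord ks m) = (\<Sum>i<length ks. SG (tg (ord m ! i)) 1 + SG (tg' (ks ! i)) 1)"
    unfolding lam_def by (simp add: addfun_sum[where f = mon_phi, OF mon_phi_add mon_phi_zero] phi_pr)
  also have "\<dots> = (\<Sum>i<length ks. SG (tg (ord m ! i)) 1) + Yk ks"
    by (simp add: sum.distrib Yk_def)
  also have "(\<Sum>i<length ks. SG (tg (ord m ! i)) (1::nat)) = ren_mon tg m"
    using addfun_mon_of_list[where f = "ren_mon tg", OF ren_mon_add ren_mon_zero, of "ord m"] assms
    by (simp add: ren_mon_single)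
  finally show ?thesis .
qed

lemma keys_lam: "KS (lam ord ks m) \<subseteq> {pr (ord m ! i) (ks ! i) | i. i < length ks}"
  unfolding lam_def using keys_msum[of "\<lambda>i. pr (ord m ! i) (ks ! i)" "{..<length ks}"] by blast

lemma keys_lift: "KS (lift pr ord ks f) \<subseteq> (\<lambda>m. lam ord ks m) ` KS f"
proof -
  have "KS (lift pr ord ks f) \<subseteq> (\<Union>m\<in>KS f. KS (SG (lam ord ks m) (LK f m)))"
    unfolding lift_eq by (rule keys_sum)
  also have "\<dots> \<subseteq> (\<lambda>m. lam ord ks m) ` KS f" by (rule UN_least) (simp only: keys_single, simp)
  finally show ?thesis .
qed


lemma lookup_lift: "LK (lift pr ord ks f) \<mu> = (\<Sum>m\<in>{m\<in>KS f. lam ord ks m = \<mu>}. LK f m)"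
proof -
  have "LK (lift pr ord ks f) \<mu> = (\<Sum>m\<in>KS f. (LK f m when lam ord ks m = \<mu>))"
    unfolding lift_eq lookup_sum by (simp add: lookup_single)
  then show ?thesis by (simp add: lookup_sum_when)
qed

lemma lift_facts:
  fixes f :: "(nat, 'k::comm_ring_1) mpoly"
  assumes hom: "\<exists>d. \<forall>m\<in>KS f. mdeg m = d"
    and lf: "init w f = SG L c" "c \<noteq> 0"
    and vo: "valid_order Q' w f ord"
    and ks: "length ks = length (ord L)" "\<forall>i<length ks. (ord L ! i, ks ! i) \<in> Q'"
  shows "\<And>m. m \<in> KS f \<Longrightarrow> mon_of_list (ord m) = m \<and> length (ord m) = length ks \<and> (\<forall>i<length ks. (ord m ! i, ks ! i) \<in> Q')"
    and "init wz (lift pr ord ks f) = SG (lam ord ks L) (LK f L)"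
    and "phi (lift pr ord ks f) = ren_poly tg f * SG (Yk ks) 1"
    and "lead_mon w f = L"
proof -
  have kI: "KS (init w f) = {L}" using lf by simp
  then have LK: "L \<in> KS f" "wdeg w L = MW w f" using keys_init[of w f] by blast+
  have LfL: "LK f L = c" using lookup_init[of w f L] lf LK(2) by simp
  have lt: "wdeg w t < wdeg w L" if t: "t \<in> KS f" "t \<noteq> L" for t
  proof -
    have "wdeg w t \<le> MW w f" using MW_ge[OF t(1)] .
    moreover have "wdeg w t \<noteq> MW w f"
    proof
      assume "wdeg w t = MW w f"
      then have "t \<in> KS (init w f)" using t(1) keys_init[of w f] by blast
      then show False using kI t(2) by simp
    qed
    ultimately show ?thesis using LK(2) by simp
  qed
  show lm: "lead_mon w f = L" unfolding lead_mon_def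
  proof (rule the_equality)
    show "\<exists>c. c \<noteq> 0 \<and> init w f = SG L c" using lf by blast
    fix L' assume "\<exists>c. c \<noteq> 0 \<and> init w f = SG L' c"
    then obtain c' where "c' \<noteq> 0" "SG L c = SG L' c'" using lf by auto
    then show "L' = L" by (metis lookup_single_eq lookup_single_not_eq)
  qed
  have vo': "\<forall>m\<in>KS f. mon_of_list (ord m) = m \<and>
       (\<forall>ks. length ks = length (ord L) \<longrightarrow> (\<forall>i<length ks. (ord L ! i, ks ! i) \<in> Q')
              \<longrightarrow> (\<forall>i<length ks. (ord m ! i, ks ! i) \<in> Q'))"
    using vo lm unfolding valid_order_def Let_def by simp
  obtain d where d: "\<forall>m\<in>KS f. mdeg m = d" using hom by blast
  show mf: "mon_of_list (ord m) = m \<and> length (ord m) = length ks \<and> (\<forall>i<length ks. (ord m ! i, ks ! i) \<in> Q')"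
    if m: "m \<in> KS f" for m
  proof -
    have "length (ord m) = mdeg m" using vo' m mdeg_mon_of_list by metis
    also have "\<dots> = mdeg L" using d m LK(1) by simp
    also have "\<dots> = length (ord L)" using vo' LK(1) mdeg_mon_of_list by metis
    finally show ?thesis using vo' m ks by simp
  qed
  define S where "S = (\<Sum>i<length ks. w' (ks ! i))"
  have wl: "wdeg wz (lam ord ks m) = wdeg w m + S" if "m \<in> KS f" for m
    using wdeg_lam mf[OF that] S_def by blast
  have ne: "lam ord ks m \<noteq> lam ord ks L" if "m \<in> KS f" "m \<noteq> L" for m
    using wl[OF that(1)] wl[OF LK(1)] lt[OF that] by force
  have "{m\<in>KS f. lam ord ks m = lam ord ks L} = {L}" using ne LK(1) by blast
  then have Ll: "LK (lift pr ord ks f) (lam ord ks L) = LK f L" by (simp add: lookup_lift)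
  show "init wz (lift pr ord ks f) = SG (lam ord ks L) (LK f L)"
  proof -
    have "init wz (lift pr ord ks f) = SG (lam ord ks L) (LK (lift pr ord ks f) (lam ord ks L))"
    proof (rule init_top)
      show "LK (lift pr ord ks f) (lam ord ks L) \<noteq> 0" using Ll LfL lf(2) by simp
      fix \<nu> assume "\<nu> \<in> KS (lift pr ord ks f)" "\<nu> \<noteq> lam ord ks L"
      then obtain m where m: "m \<in> KS f" "\<nu> = lam ord ks m" using keys_lift by blast
      then have "m \<noteq> L" using \<open>\<nu> \<noteq> lam ord ks L\<close> by blast
      then show "wdeg wz \<nu> < wdeg wz (lam ord ks L)" using wl[OF m(1)] wl[OF LK(1)] lt[OF m(1)] m(2) by simp
    qed
    then show ?thesis using Ll by simp
  qed
  show "phi (lift pr ord ks f) = ren_poly tg f * SG (Yk ks) 1"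
  proof -
    have "phi (lift pr ord ks f) = (\<Sum>m\<in>KS f. SG (mon_phi (lam ord ks m)) (LK f m))"
      unfolding lift_eq by (simp add: phi_sum phi_single)
    also have "\<dots> = (\<Sum>m\<in>KS f. SG (ren_mon tg m + Yk ks) (LK f m))"
      by (rule sum.cong) (use mf phi_lam in auto)
    also have "\<dots> = ren_poly tg f * SG (Yk ks) 1"
      by (simp add: ren_poly_def sum_distrib_right mult_single)
    finally show ?thesis .
  qed
qed

lemma lookup_ren_mon: "LK (ren_mon g n) u = (\<Sum>p\<in>{p\<in>KS n. g p = u}. LK n p)"
proof -
  have "LK (ren_mon g n) u = (\<Sum>p\<in>KS n. (LK n p when g p = u))"
    unfolding ren_mon_def lookup_sum by (simp add: lookup_single)
  then show ?thesis by (simp add: lookup_sum_when)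
qed

lemma lift_div:
  "\<forall>n e. ren_mon pj n = mon_of_list js + e \<longrightarrow>
     (\<exists>ks e'. length ks = length js \<and> (\<forall>i<length js. pr (js ! i) (ks ! i) \<in> KS n) \<and>
        n = (\<Sum>i<length js. SG (pr (js ! i) (ks ! i)) 1) + e')"
proof (induction js)
  case Nil
  then show ?case by simp
next
  case (Cons u js)
  show ?case
  proof (intro allI impI)
    fix n e assume h: "ren_mon pj n = mon_of_list (u # js) + e"
    have "LK (ren_mon pj n) u \<ge> 1" using h by (simp add: mon_of_list_Cons lookup_add)
    then have "(\<Sum>p\<in>{p\<in>KS n. pj p = u}. LK n p) \<ge> 1" by (simp only: lookup_ren_mon)
    then obtain p where p: "p \<in> KS n" "pj p = u"
      by (metis (mono_tags, lifting) mem_Collect_eq not_one_le_zero sum.neutral)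
    have "LK (SG p 1) v \<le> LK n v" for v using p(1)
      by (simp add: lookup_single when_def in_keys_iff, metis Suc_leI)
    then have nd: "n = SG p 1 + (n - SG p 1)" by (rule le_decomp)
    define n' where "n' = n - SG p 1"
    have "ren_mon pj n = SG u 1 + ren_mon pj n'"
      using nd p(2) by (metis n'_def ren_mon_add ren_mon_single)
    then have "ren_mon pj n' = mon_of_list js + e" using h by (simp add: mon_of_list_Cons add.assoc)
    then obtain ks e' where ih: "length ks = length js" "\<forall>i<length js. pr (js ! i) (ks ! i) \<in> KS n'"
        "n' = (\<Sum>i<length js. SG (pr (js ! i) (ks ! i)) 1) + e'" using Cons.IH by blast
    have pp: "pr u (oj p) = p" using pr_pj[of p] p(2) by simp
    have kn': "KS n' \<subseteq> KS n" unfolding n'_def by (rule keys_minus_nat)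
    show "\<exists>ks e'. length ks = length (u # js) \<and> (\<forall>i<length (u # js). pr ((u # js) ! i) (ks ! i) \<in> KS n) \<and>
        n = (\<Sum>i<length (u # js). SG (pr ((u # js) ! i) (ks ! i)) 1) + e'"
    proof (intro exI conjI)
      show "length (oj p # ks) = length (u # js)" using ih(1) by simp
      show "\<forall>i<length (u # js). pr ((u # js) ! i) ((oj p # ks) ! i) \<in> KS n"
      proof (intro allI impI)
        fix i assume "i < length (u # js)"
        then show "pr ((u # js) ! i) ((oj p # ks) ! i) \<in> KS n"
          using pp p(1) ih(2) kn' by (cases i) auto
      qed
      show "n = (\<Sum>i<length (u # js). SG (pr ((u # js) ! i) ((oj p # ks) ! i)) 1) + e'"
        unfolding sum_idx_Cons2[where f = "\<lambda>a b. SG (pr a b) 1"]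
        using nd ih(3) pp by (simp add: n'_def add.assoc)
    qed
  qed
qed

end


lemma ls_x: "liftside Pair fst snd Inl Inr w1 w2 (\<lambda>p. w1 (fst p) + w2 (snd p))"
  by unfold_locales (simp_all add: mon_phi_single)

lemma ls_y: "liftside (\<lambda>a b. (b, a)) snd fst Inr Inl w2 w1 (\<lambda>p. w1 (fst p) + w2 (snd p))"
  by unfold_locales (simp_all add: mon_phi_single add.commute)

lemma wdeg_phi: "wdeg (wxy w1 w2) (mon_phi n) = wdeg (\<lambda>p. w1 (fst p) + w2 (snd p)) n"
  by (rule addfun_eqI[where f = "\<lambda>n. wdeg (wxy w1 w2) (mon_phi n)"])
     (simp_all add: mon_phi_add wdeg_add mon_phi_single wxy_def algebra_simps)

lemma keys_phi: "KS (phi g) \<subseteq> mon_phi ` KS g"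
proof -
  have "KS (phi g) \<subseteq> (\<Union>m\<in>KS g. KS (SG (mon_phi m) (LK g m)))" unfolding phi_def by (rule keys_sum)
  also have "\<dots> \<subseteq> mon_phi ` KS g" by (rule UN_least) (simp only: keys_single, simp)
  finally show ?thesis .
qed

lemma phi_bin: "mon_phi a = mon_phi b \<Longrightarrow> phi (bin a b :: (nat \<times> nat, 'k::comm_ring_1) mpoly) = 0"
  by (simp add: bin_def phi_diff phi_single)

lemma init_bin:
  assumes "mon_phi a = mon_phi b"
  shows "init (\<lambda>p. w1 (fst p) + w2 (snd p)) (bin a b :: (nat \<times> nat, 'k::comm_ring_1) mpoly) = bin a b"
proof (rule init_homog)
  fix m assume "m \<in> KS (bin a b :: (nat \<times> nat, 'k) mpoly)"
  then have "m = a \<or> m = b" using keys_diff[of "SG a (1::'k)" "SG b 1"] unfolding bin_def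
    by (auto split: if_splits)
  then show "wdeg (\<lambda>p. w1 (fst p) + w2 (snd p)) m = wdeg (\<lambda>p. w1 (fst p) + w2 (snd p)) a"
    using assms wdeg_phi[of w1 w2 a] wdeg_phi[of w1 w2 b] by auto
qed

lemma cycle_bin:
  assumes "induced_cycle Q js ks"
  shows "\<exists>a b. cycle_binomial js ks = (bin a b :: (nat \<times> nat, 'k::comm_ring_1) mpoly) \<and> mon_phi a = mon_phi b"
proof -
  define l where "l = length js"
  have l2: "l \<ge> 2" and lk: "length ks = l" using assms unfolding induced_cycle_def Let_def l_def by auto
  define a where "a = (\<Sum>i<l. SG (js ! i, ks ! i) (1::nat))"
  define b where "b = (\<Sum>i<l. SG (js ! ((i + 1) mod l), ks ! i) (1::nat))"
  have "cycle_binomial js ks = (bin a b :: (nat \<times> nat, 'k) mpoly)"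
    unfolding cycle_binomial_def Let_def bin_def a_def b_def l_def ..
  moreover have "mon_phi a = mon_phi b"
  proof -
    have rr: "(\<Sum>i<l. SG (Inl (js ! (Suc i mod l))) (Suc 0)) = (\<Sum>i<l. SG (Inl (js ! i)) (Suc 0))"
      using sum_rot[of l "\<lambda>i. SG (Inl (js ! i)) (Suc 0)" 1] l2 by simp
    show ?thesis unfolding a_def b_def phi_msum by (simp, rule rr[symmetric])
  qed
  ultimately show ?thesis by blast
qed

lemma finite_Lifts:
  assumes "finite Q'"
  shows "finite (Lifts pr Q' w ord f)"
proof -
  let ?n = "length (ord (lead_mon w f))"
  have "Lifts pr Q' w ord f \<subseteq> (\<lambda>ks. lift pr ord ks f) ` {ks. set ks \<subseteq> snd ` Q' \<and> length ks = ?n}"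
  proof
    fix x assume "x \<in> Lifts pr Q' w ord f"
    then obtain ks where ks: "x = lift pr ord ks f" "length ks = ?n"
        "\<forall>i<length ks. (ord (lead_mon w f) ! i, ks ! i) \<in> Q'" unfolding Lifts_def by blast
    have "set ks \<subseteq> snd ` Q'"
    proof
      fix k assume "k \<in> set ks"
      then obtain i where "i < length ks" "ks ! i = k" by (auto simp: in_set_conv_nth)
      then show "k \<in> snd ` Q'" using ks(3) by force
    qed
    then show "x \<in> (\<lambda>ks. lift pr ord ks f) ` {ks. set ks \<subseteq> snd ` Q' \<and> length ks = ?n}" using ks by blast
  qed
  moreover have "finite {ks. set ks \<subseteq> snd ` Q' \<and> length ks = ?n}"
    by (rule finite_lists_length_eq) (use assms in simp)
  ultimately show ?thesis using finite_subset by blast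
qed

lemma finite_H_Q:
  assumes "finite Q"
  shows "finite (H_Q Q :: (nat \<times> nat, 'k::comm_ring_1) mpoly set)"
proof -
  let ?A = "{js. set js \<subseteq> fst ` Q \<and> length js \<le> card (fst ` Q)}"
  let ?B = "{ks. set ks \<subseteq> snd ` Q \<and> length ks \<le> card (snd ` Q)}"
  have "H_Q Q \<subseteq> (\<lambda>(js, ks). (cycle_binomial js ks :: (nat \<times> nat, 'k) mpoly)) ` (?A \<times> ?B)"
  proof
    fix x :: "(nat \<times> nat, 'k) mpoly" assume "x \<in> H_Q Q"
    then obtain js ks where c: "induced_cycle Q js ks" "x = cycle_binomial js ks" unfolding H_Q_def by blast
    define l where "l = length js"
    have lk: "length ks = l" and dj: "distinct js" and dk: "distinct ks"
      and e: "\<forall>i<l. (js ! i, ks ! i) \<in> Q" using c(1) unfolding induced_cycle_def Let_def l_def by auto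
    have sj: "set js \<subseteq> fst ` Q"
    proof
      fix j assume "j \<in> set js"
      then obtain i where "i < l" "js ! i = j" by (auto simp: in_set_conv_nth l_def)
      then show "j \<in> fst ` Q" using e by force
    qed
    have sk: "set ks \<subseteq> snd ` Q"
    proof
      fix k assume "k \<in> set ks"
      then obtain i where "i < l" "ks ! i = k" using lk by (auto simp: in_set_conv_nth)
      then show "k \<in> snd ` Q" using e by force
    qed
    have "length js \<le> card (fst ` Q)"
      using distinct_card[OF dj] card_mono[OF _ sj] assms by simp
    moreover have "length ks \<le> card (snd ` Q)"
      using distinct_card[OF dk] card_mono[OF _ sk] assms by simp
    ultimately show "x \<in> (\<lambda>(js, ks). (cycle_binomial js ks :: (nat \<times> nat, 'k) mpoly)) ` (?A \<times> ?B)"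
      using sj sk c(2) by force
  qed
  moreover have "finite (?A \<times> ?B)"
    using finite_lists_length_le[of "fst ` Q"] finite_lists_length_le[of "snd ` Q"] assms by simp
  ultimately show ?thesis using finite_subset by blast
qed


lemma lead_mon_eq:
  assumes "init w f = SG L c" "c \<noteq> 0"
  shows "lead_mon w f = L" "L \<in> KS f" "LK f L = c"
proof -
  show "lead_mon w f = L" unfolding lead_mon_def
  proof (rule the_equality)
    show "\<exists>c. c \<noteq> 0 \<and> init w f = SG L c" using assms by blast
    fix L' assume "\<exists>c. c \<noteq> 0 \<and> init w f = SG L' c"
    then obtain c' where "c' \<noteq> 0" "SG L c = SG L' c'" using assms by auto
    then show "L' = L" by (metis lookup_single_eq lookup_single_not_eq)
  qed
  have kI: "KS (init w f) = {L}" using assms by simp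
  then show "L \<in> KS f" using keys_init[of w f] by blast
  have "wdeg w L = MW w f" using kI keys_init[of w f] by blast
  then show "LK f L = c" using lookup_init[of w f L] assms by simp
qed

lemma (in liftside) nonstd_in_W:
  fixes f :: "(nat, 'k::field) mpoly" and P :: "(nat \<times> nat, 'k) mpoly set"
  assumes hom: "\<exists>d. \<forall>m\<in>KS f. mdeg m = d"
    and lf: "init w f = SG L c" "c \<noteq> 0"
    and vo: "valid_order Q' w f ord"
    and hQ: "\<And>u v. pr u v \<in> Q \<Longrightarrow> (u, v) \<in> Q'"
    and nQ: "KS n \<subseteq> Q"
    and dv: "divs L (ren_mon pj n)"
    and LP: "Lifts pr Q' w ord f \<subseteq> P"
    and PR: "init wz ` P \<subseteq> polys_in Q"
  shows "SG n d \<in> ideal_gen (polys_in Q) (init wz ` P)"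
proof -
  have lm: "lead_mon w f = L" and Lf: "L \<in> KS f" and LfL: "LK f L = c" using lead_mon_eq[OF lf] by auto
  have mL: "mon_of_list (ord L) = L" using vo Lf lm unfolding valid_order_def Let_def by simp
  obtain e where "ren_mon pj n = L + e" using dv unfolding divs_def by blast
  then have "ren_mon pj n = mon_of_list (ord L) + e" using mL by simp
  from lift_div[of "ord L", rule_format, OF this]
  obtain ks e' where ks: "length ks = length (ord L)" "\<forall>i<length (ord L). pr (ord L ! i) (ks ! i) \<in> KS n"
      "n = (\<Sum>i<length (ord L). SG (pr (ord L ! i) (ks ! i)) 1) + e'"
    by blast
  have ksQ: "\<forall>i<length ks. (ord L ! i, ks ! i) \<in> Q'"
  proof (intro allI impI)
    fix i assume "i < length ks"
    then have "pr (ord L ! i) (ks ! i) \<in> Q" using ks(1,2) nQ by auto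
    then show "(ord L ! i, ks ! i) \<in> Q'" by (rule hQ)
  qed
  define x where "x = lift pr ord ks f"
  have "x \<in> Lifts pr Q' w ord f" unfolding Lifts_def x_def lm using ks(1) ksQ by blast
  then have xP: "x \<in> P" using LP by blast
  have ix: "init wz x = SG (lam ord ks L) (LK f L)"
    unfolding x_def by (rule lift_facts(2)[OF hom lf vo]) (use ks(1) ksQ in auto)
  have lamL: "lam ord ks L = (\<Sum>i<length (ord L). SG (pr (ord L ! i) (ks ! i)) 1)"
    unfolding lam_def using ks(1) by simp
  have n_eq: "n = e' + lam ord ks L" using ks(3) lamL by (simp add: add.commute)
  have e'Q: "KS e' \<subseteq> Q" using nQ n_eq by (simp add: keys_add_mon)
  have "SG e' (d / c) * SG (lam ord ks L) c = SG n d" using lf(2) n_eq by (simp add: mult_single)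
  moreover have "SG (lam ord ks L) c \<in> ideal_gen (polys_in Q) (init wz ` P)"
  proof -
    have "init wz x \<in> init wz ` P" using xP by blast
    then show ?thesis using ideal_gen_sub[of "init wz ` P" "polys_in Q"] ix LfL by auto
  qed
  ultimately show ?thesis
    using ideal_mult[OF ideal_gen_ideal[OF PR] polys_in_single[OF e'Q, of "d / c"]] by metis
qed


lemma sum_split_pred:
  "finite A \<Longrightarrow> (\<Sum>x\<in>A. g x) = (\<Sum>x\<in>{x\<in>A. P x}. g x) + (\<Sum>x\<in>{x\<in>A. \<not> P x}. g x)"
proof -
  assume fin: "finite A"
  have "A = {x\<in>A. P x} \<union> {x\<in>A. \<not> P x}" by blast
  then have "(\<Sum>x\<in>A. g x) = (\<Sum>x\<in>{x\<in>A. P x} \<union> {x\<in>A. \<not> P x}. g x)" by simp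
  also have "\<dots> = (\<Sum>x\<in>{x\<in>A. P x}. g x) + (\<Sum>x\<in>{x\<in>A. \<not> P x}. g x)"
    by (rule sum.union_disjoint) (use fin in auto)
  finally show ?thesis .
qed

lemma keys_sum_single_sub: "KS (\<Sum>n\<in>A. SG n (c n)) \<subseteq> A"
proof -
  have "KS (\<Sum>n\<in>A. SG n (c n)) \<subseteq> (\<Union>n\<in>A. KS (SG n (c n)))" by (rule keys_sum)
  also have "\<dots> \<subseteq> A" by (rule UN_least) (simp only: keys_single, simp)
  finally show ?thesis .
qed

lemma lookup_sum_single: "finite A \<Longrightarrow> LK (\<Sum>n\<in>A. SG n (c n)) m = (if m \<in> A then c m else 0)"
  by (simp add: lookup_sum lookup_single sum_when_eq[where g = c, unfolded when_def] when_def)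


theorem theorem3p7:
  fixes r s :: nat and Q :: "(nat \<times> nat) set"
    and I J F G :: "(nat, 'k::field) mpoly set"
    and \<omega>1 \<omega>2 :: "nat \<Rightarrow> real"
    and oF oG :: "(nat, 'k) mpoly \<Rightarrow> (nat \<Rightarrow>\<^sub>0 nat) \<Rightarrow> nat list"
  assumes "0 < r" and "0 < s" and "Q \<subseteq> {1..r} \<times> {1..s}"
    and "is_ideal_in (polys_in {1..r}) I" and "homog_ideal I"
    and "is_ideal_in (polys_in {1..s}) J" and "homog_ideal J"
    and "groebner_basis (polys_in {1..r}) \<omega>1 F I"
    and "groebner_basis (polys_in {1..s}) \<omega>2 G J"
    and "\<forall>f\<in>F. weakly_Q_hom Q \<omega>1 f"
    and "\<forall>g\<in>G. weakly_Q_hom (converse Q) \<omega>2 g"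
    and "\<forall>f\<in>F. valid_order Q \<omega>1 f (oF f)"
    and "\<forall>g\<in>G. valid_order (converse Q) \<omega>2 g (oG g)"
  shows "pseudo_GB (polys_in Q) (\<lambda>p. \<omega>1 (fst p) + \<omega>2 (snd p))
           ((\<Union>f\<in>F. Lifts Pair Q \<omega>1 (oF f) f)
            \<union> (\<Union>g\<in>G. Lifts (\<lambda>a b. (b, a)) (converse Q) \<omega>2 (oG g) g)
            \<union> H_Q Q)
           (glue r s Q I J)"
proof -
  note QQ = assms(3)
  have Qfin: "finite Q" using QQ finite_subset by blast
  have homF: "\<exists>d. \<forall>m\<in>KS f. mdeg m = d" and leadF: "\<exists>L c. c \<noteq> 0 \<and> init \<omega>1 f = SG L c" if "f \<in> F" for f
    using assms(10) that unfolding weakly_Q_hom_def by blast+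
  have homG: "\<exists>d. \<forall>m\<in>KS g. mdeg m = d" and leadG: "\<exists>L c. c \<noteq> 0 \<and> init \<omega>2 g = SG L c" if "g \<in> G" for g
    using assms(11) that unfolding weakly_Q_hom_def by blast+
  have sideF: "side {1..r} I F \<omega>1" unfolding side_def using assms(4,8) homF leadF by auto
  have sideG: "side {1..s} J G \<omega>2" unfolding side_def using assms(6,9) homG leadG by auto
  interpret S1: side "{1..r}" I F \<omega>1 by (rule sideF)
  interpret S2: side "{1..s}" J G \<omega>2 by (rule sideG)
  interpret TS: two_sides "{1..r}" I F \<omega>1 "{1..s}" J G \<omega>2
    unfolding two_sides_def using sideF sideG by blast
  interpret LX: liftside Pair fst snd Inl Inr \<omega>1 \<omega>2 "\<lambda>p. \<omega>1 (fst p) + \<omega>2 (snd p)" by (rule ls_x)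
  interpret LY: liftside "\<lambda>a b. (b, a)" snd fst Inr Inl \<omega>2 \<omega>1 "\<lambda>p. \<omega>1 (fst p) + \<omega>2 (snd p)" by (rule ls_y)
  define wz where "wz = (\<lambda>p. \<omega>1 (fst p) + \<omega>2 (snd p))"
  define LF where "LF = (\<Union>f\<in>F. Lifts Pair Q \<omega>1 (oF f) f)"
  define LG where "LG = (\<Union>g\<in>G. Lifts (\<lambda>a b. (b, a)) (converse Q) \<omega>2 (oG g) g)"
  define P where "P = LF \<union> LG \<union> (H_Q Q :: (nat \<times> nat, 'k) mpoly set)"
  define K where "K = glue r s Q I J"
  define Gens where "Gens = ren_poly Inl ` I \<union> ren_poly Inr ` J"
  have Vxy: "TS.Vxy = Inl ` {1..r} \<union> Inr ` {1..s}" by (rule TS.Vxy_def)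
  have Kmem: "x \<in> K \<longleftrightarrow> x \<in> polys_in Q \<and> phi x \<in> ideal_gen (polys_in TS.Vxy) Gens" for x
    unfolding K_def glue_def Gens_def Vxy by simp
  have gens_sub: "Gens \<subseteq> polys_in TS.Vxy" using TS.gens_in_Zs unfolding Gens_def TS.Zs_def by blast
  note Gid = ideal_gen_ideal[OF gens_sub]

  have LFK: "LF \<subseteq> K"
  proof
    fix x assume "x \<in> LF"
    then obtain f where f: "f \<in> F" "x \<in> Lifts Pair Q \<omega>1 (oF f) f" unfolding LF_def by blast
    obtain L c where lf: "c \<noteq> 0" "init \<omega>1 f = SG L c" using leadF[OF f(1)] by blast
    have lm: "lead_mon \<omega>1 f = L" using lead_mon_eq[OF lf(2) lf(1)] by simp
    obtain ks where ks: "x = lift Pair (oF f) ks f" "length ks = length (oF f L)"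
        "\<forall>i<length ks. (oF f L ! i, ks ! i) \<in> Q" using f(2) lm unfolding Lifts_def by blast
    have vo: "valid_order Q \<omega>1 f (oF f)" using assms(12) f(1) by blast
    note fa = LX.lift_facts[OF homF[OF f(1)] lf(2) lf(1) vo ks(2) ks(3)]
    have xQ: "x \<in> polys_in Q"
    proof (rule polys_inI)
      fix m assume "m \<in> KS x"
      then obtain m0 where m0: "m0 \<in> KS f" "m = LX.lam (oF f) ks m0" using LX.keys_lift ks(1) by blast
      have "KS m \<subseteq> {(oF f m0 ! i, ks ! i) | i. i < length ks}" using LX.keys_lam m0(2) by simp
      then show "KS m \<subseteq> Q" using fa(1)[OF m0(1)] by blast
    qed
    have Yin: "SG (LX.Yk ks) 1 \<in> polys_in TS.Vxy"
    proof (rule polys_in_single)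
      have "KS (LX.Yk ks) \<subseteq> (\<lambda>i. Inr (ks ! i)) ` {..<length ks}"
        unfolding LX.Yk_def using keys_msum[of "\<lambda>i. Inr (ks ! i)" "{..<length ks}"] by simp
      moreover have "\<forall>i<length ks. ks ! i \<in> {1..s}" using ks(3) QQ by blast
      ultimately show "KS (LX.Yk ks) \<subseteq> TS.Vxy" unfolding Vxy by blast
    qed
    have "ren_poly Inl f \<in> ideal_gen (polys_in TS.Vxy) Gens"
      using f(1) S1.F_sub ideal_gen_sub unfolding Gens_def by blast
    then have "SG (LX.Yk ks) 1 * ren_poly Inl f \<in> ideal_gen (polys_in TS.Vxy) Gens"
      by (rule ideal_mult[OF Gid Yin])
    then have "phi x \<in> ideal_gen (polys_in TS.Vxy) Gens" using fa(3) ks(1) by (simp add: mult.commute)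
    then show "x \<in> K" using xQ Kmem by blast
  qed
  have LGK: "LG \<subseteq> K"
  proof
    fix x assume "x \<in> LG"
    then obtain g where g: "g \<in> G" "x \<in> Lifts (\<lambda>a b. (b, a)) (converse Q) \<omega>2 (oG g) g" unfolding LG_def by blast
    obtain L c where lf: "c \<noteq> 0" "init \<omega>2 g = SG L c" using leadG[OF g(1)] by blast
    have lm: "lead_mon \<omega>2 g = L" using lead_mon_eq[OF lf(2) lf(1)] by simp
    obtain ks where ks: "x = lift (\<lambda>a b. (b, a)) (oG g) ks g" "length ks = length (oG g L)"
        "\<forall>i<length ks. (oG g L ! i, ks ! i) \<in> converse Q" using g(2) lm unfolding Lifts_def by blast
    have vo: "valid_order (converse Q) \<omega>2 g (oG g)" using assms(13) g(1) by blast
    note fa = LY.lift_facts[OF homG[OF g(1)] lf(2) lf(1) vo ks(2) ks(3)]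
    have xQ: "x \<in> polys_in Q"
    proof (rule polys_inI)
      fix m assume "m \<in> KS x"
      then obtain m0 where m0: "m0 \<in> KS g" "m = LY.lam (oG g) ks m0" using LY.keys_lift ks(1) by blast
      have "KS m \<subseteq> {(ks ! i, oG g m0 ! i) | i. i < length ks}" using LY.keys_lam m0(2) by simp
      then show "KS m \<subseteq> Q" using fa(1)[OF m0(1)] by blast
    qed
    have Yin: "SG (LY.Yk ks) 1 \<in> polys_in TS.Vxy"
    proof (rule polys_in_single)
      have "KS (LY.Yk ks) \<subseteq> (\<lambda>i. Inl (ks ! i)) ` {..<length ks}"
        unfolding LY.Yk_def using keys_msum[of "\<lambda>i. Inl (ks ! i)" "{..<length ks}"] by simp
      moreover have "\<forall>i<length ks. ks ! i \<in> {1..r}" using ks(3) QQ by blast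
      ultimately show "KS (LY.Yk ks) \<subseteq> TS.Vxy" unfolding Vxy by blast
    qed
    have "ren_poly Inr g \<in> ideal_gen (polys_in TS.Vxy) Gens"
      using g(1) S2.F_sub ideal_gen_sub unfolding Gens_def by blast
    then have "SG (LY.Yk ks) 1 * ren_poly Inr g \<in> ideal_gen (polys_in TS.Vxy) Gens"
      by (rule ideal_mult[OF Gid Yin])
    then have "phi x \<in> ideal_gen (polys_in TS.Vxy) Gens" using fa(3) ks(1) by (simp add: mult.commute)
    then show "x \<in> K" using xQ Kmem by blast
  qed
  have HK: "H_Q Q \<subseteq> K"
  proof
    fix x :: "(nat \<times> nat, 'k) mpoly" assume x: "x \<in> H_Q Q"
    then obtain js ks where c: "induced_cycle Q js ks" "x = cycle_binomial js ks" unfolding H_Q_def by blast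
    obtain a b where ab: "x = bin a b" "mon_phi a = mon_phi b" using cycle_bin[OF c(1)] c(2) by metis
    have "phi x = 0" using phi_bin[OF ab(2)] ab(1) by simp
    then have "phi x \<in> ideal_gen (polys_in TS.Vxy) Gens" using ideal_zero[OF Gid] by simp
    moreover have "x \<in> polys_in Q" using x H_Q_sub by blast
    ultimately show "x \<in> K" using Kmem by blast
  qed
  have PK: "P \<subseteq> K" unfolding P_def using LFK LGK HK by blast

  have finP: "finite P"
  proof -
    have "finite LF" unfolding LF_def using S1.F_fin finite_Lifts[OF Qfin] by blast
    moreover have "finite LG"
    proof -
      have cf: "finite (converse Q)" using Qfin by simp
      have "\<And>g. finite (Lifts (\<lambda>a b. (b, a)) (converse Q) \<omega>2 (oG g) g)" by (rule finite_Lifts[OF cf])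
      then show ?thesis unfolding LG_def using S2.F_fin by blast
    qed
    moreover have "finite (H_Q Q :: (nat \<times> nat, 'k) mpoly set)" by (rule finite_H_Q[OF Qfin])
    ultimately show ?thesis unfolding P_def by blast
  qed

  have KR: "K \<subseteq> polys_in Q" using Kmem by blast
  have iKR: "init wz ` K \<subseteq> polys_in Q" using KR init_polys_in by blast
  have iPR: "init wz ` P \<subseteq> polys_in Q" using PK iKR by blast
  define W where "W = ideal_gen (polys_in Q) (init wz ` P)"
  have Wid: "is_ideal_in (polys_in Q) W" unfolding W_def by (rule ideal_gen_ideal[OF iPR])
  have HW: "HI Q \<subseteq> W"
  proof -
    have "H_Q Q \<subseteq> init wz ` P"
    proof
      fix x :: "(nat \<times> nat, 'k) mpoly" assume x: "x \<in> H_Q Q"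
      then obtain js ks where c: "induced_cycle Q js ks" "x = cycle_binomial js ks" unfolding H_Q_def by blast
      obtain a b where ab: "x = bin a b" "mon_phi a = mon_phi b" using cycle_bin[OF c(1)] c(2) by metis
      have "init wz x = x" unfolding wz_def using init_bin[OF ab(2)] ab(1) by simp
      moreover have "x \<in> P" unfolding P_def using x by blast
      ultimately show "x \<in> init wz ` P" by force
    qed
    then show ?thesis unfolding HI_def W_def by (rule ideal_gen_mono[OF _ iPR])
  qed
  have nonstd: "SG n d \<in> W"
    if nQ: "KS n \<subseteq> Q" and ns: "\<not> (ren_mon fst n \<in> S1.Std \<and> ren_mon snd n \<in> S2.Std)" for n d
  proof (cases "ren_mon fst n \<in> S1.Std")
    case False
    then obtain f where f: "f \<in> F" "divs (S1.LMf f) (ren_mon fst n)" unfolding S1.Std_def by blast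
    obtain L c where lf: "c \<noteq> 0" "init \<omega>1 f = SG L c" using leadF[OF f(1)] by blast
    have "S1.LMf f = L" unfolding S1.LMf_def using lead_mon_eq[OF lf(2) lf(1)] by simp
    then have dv: "divs L (ren_mon fst n)" using f(2) by simp
    have LP: "Lifts Pair Q \<omega>1 (oF f) f \<subseteq> P" unfolding P_def LF_def using f(1) by blast
    show ?thesis unfolding W_def wz_def
      by (rule LX.nonstd_in_W[OF homF[OF f(1)] lf(2) lf(1) _ _ nQ dv LP])
         (use assms(12) f(1) iPR wz_def in auto)
  next
    case True
    then have "ren_mon snd n \<notin> S2.Std" using ns by blast
    then obtain g where g: "g \<in> G" "divs (S2.LMf g) (ren_mon snd n)" unfolding S2.Std_def by blast
    obtain L c where lf: "c \<noteq> 0" "init \<omega>2 g = SG L c" using leadG[OF g(1)] by blast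
    have "S2.LMf g = L" unfolding S2.LMf_def using lead_mon_eq[OF lf(2) lf(1)] by simp
    then have dv: "divs L (ren_mon snd n)" using g(2) by simp
    have LP: "Lifts (\<lambda>a b. (b, a)) (converse Q) \<omega>2 (oG g) g \<subseteq> P" unfolding P_def LG_def using g(1) by blast
    show ?thesis unfolding W_def wz_def
      by (rule LY.nonstd_in_W[OF homG[OF g(1)] lf(2) lf(1) _ _ nQ dv LP])
         (use assms(13) g(1) iPR wz_def in auto)
  qed
  have main: "init wz h \<in> W" if hK: "h \<in> K" for h
  proof (cases "h = 0")
    case True
    then show ?thesis using ideal_zero[OF Wid] by simp
  next
    case False
    have hQ: "h \<in> polys_in Q" and hp: "phi h \<in> ideal_gen (polys_in TS.Vxy) Gens" using hK Kmem by blast+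
    define ih where "ih = init wz h"
    define zstd where "zstd n \<longleftrightarrow> ren_mon fst n \<in> S1.Std \<and> ren_mon snd n \<in> S2.Std" for n
    define hN where "hN = (\<Sum>n\<in>{n\<in>KS ih. \<not> zstd n}. SG n (LK ih n))"
    define hS where "hS = (\<Sum>n\<in>{n\<in>KS ih. zstd n}. SG n (LK ih n))"
    have split: "ih = hS + hN"
      using poly_expand[of ih] sum_split_pred[of "KS ih" "\<lambda>n. SG n (LK ih n)" zstd]
      unfolding hS_def hN_def by simp
    have kih: "KS ih \<subseteq> KS h" unfolding ih_def by (rule keys_init_sub)
    have nQ: "KS n \<subseteq> Q" if "n \<in> KS h" for n using polys_inD[OF hQ that] .
    have hNW: "hN \<in> W" unfolding hN_def
    proof (rule ideal_sum[OF Wid])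
      fix n assume "n \<in> {n\<in>KS ih. \<not> zstd n}"
      then have "n \<in> KS h" "\<not> zstd n" using kih by blast+
      then show "SG n (LK ih n) \<in> W" using nonstd[OF nQ] unfolding zstd_def by blast
    qed
    have hSQ: "hS \<in> polys_in Q" unfolding hS_def
      by (rule polys_in_sum, rule polys_in_single) (use kih nQ in blast)
    have kS: "KS hS \<subseteq> {n\<in>KS ih. zstd n}" unfolding hS_def by (rule keys_sum_single_sub)
    have kN: "KS hN \<subseteq> {n\<in>KS ih. \<not> zstd n}" unfolding hN_def by (rule keys_sum_single_sub)
    define C where "C = MW wz h"
    have wphi: "wdeg (wxy \<omega>1 \<omega>2) (mon_phi n) = wdeg wz n" for n unfolding wz_def by (rule wdeg_phi)
    have phS: "phi hS = 0"
    proof (rule ccontr)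
      assume ne: "phi hS \<noteq> 0"
      then have "KS (phi hS) \<noteq> {}" by simp
      then obtain \<mu>0 where mu0: "\<mu>0 \<in> KS (phi hS)" by blast
      then obtain n0 where n0: "n0 \<in> KS hS" "\<mu>0 = mon_phi n0" using keys_phi by blast
      then have n0i: "n0 \<in> KS ih" "zstd n0" using kS by blast+
      have wn0: "wdeg wz n0 = C" using n0i(1) unfolding ih_def C_def keys_init by blast
      have std1: "xp \<mu>0 \<in> S1.Std" using n0i(2) n0(2) unfolding zstd_def by (simp add: xp_mon_phi)
      have std2: "yp \<mu>0 \<in> S2.Std" using n0i(2) n0(2) unfolding zstd_def by (simp add: yp_mon_phi)
      have wmu: "wdeg (wxy \<omega>1 \<omega>2) \<mu>0 = C" using wn0 n0(2) wphi by simp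
      have top: "\<forall>\<nu>\<in>KS (phi h). wdeg (wxy \<omega>1 \<omega>2) \<nu> \<le> wdeg (wxy \<omega>1 \<omega>2) \<mu>0"
      proof
        fix \<nu> assume "\<nu> \<in> KS (phi h)"
        then obtain n where n: "n \<in> KS h" "\<nu> = mon_phi n" using keys_phi by blast
        then show "wdeg (wxy \<omega>1 \<omega>2) \<nu> \<le> wdeg (wxy \<omega>1 \<omega>2) \<mu>0"
          using MW_ge[OF n(1), of wz] wphi wmu unfolding C_def by simp
      qed
      have hdec: "h = hS + hN + (h - ih)" using split by simp
      have l1: "LK (phi hN) \<mu>0 = 0"
      proof -
        have e: "{n\<in>KS hN. mon_phi n = \<mu>0} = {}"
        proof (rule ccontr)
          assume "{n\<in>KS hN. mon_phi n = \<mu>0} \<noteq> {}"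
          then obtain n where n: "n \<in> KS hN" "mon_phi n = \<mu>0" by blast
          then have "\<not> zstd n" using kN by blast
          moreover have "zstd n" using std1 std2 n(2) unfolding zstd_def by (simp add: xp_mon_phi[symmetric] yp_mon_phi[symmetric])
          ultimately show False by blast
        qed
        show ?thesis unfolding lookup_phi e by simp
      qed
      have l2: "LK (phi (h - ih)) \<mu>0 = 0"
      proof -
        have e: "{n\<in>KS (h - ih). mon_phi n = \<mu>0} = {}"
        proof (rule ccontr)
          assume "{n\<in>KS (h - ih). mon_phi n = \<mu>0} \<noteq> {}"
          then obtain n where n: "n \<in> KS (h - ih)" "mon_phi n = \<mu>0" by blast
          have nh: "n \<in> KS h" using n(1) keys_diff[of h ih] kih by blast
          have "wdeg wz n \<noteq> C"
          proof
            assume "wdeg wz n = C"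
            then have "LK ih n = LK h n" unfolding ih_def C_def by (simp add: lookup_init)
            then have "LK (h - ih) n = 0" by (simp add: lookup_minus)
            then show False using n(1) by (simp add: in_keys_iff)
          qed
          moreover have "wdeg wz n \<le> C" unfolding C_def by (rule MW_ge[OF nh])
          ultimately have "wdeg wz n < C" by simp
          then show False using n(2) wphi[of n] wmu by simp
        qed
        show ?thesis unfolding lookup_phi e by simp
      qed
      have "phi h = phi hS + phi hN + phi (h - ih)"
        using hdec phi_add by metis
      then have "LK (phi h) \<mu>0 = LK (phi hS) \<mu>0" using l1 l2 by (simp add: lookup_add)
      then have mu0h: "\<mu>0 \<in> KS (phi h)" using mu0 by (simp add: in_keys_iff)
      show False
        by (rule TS.E_main[OF hp[unfolded Gens_def] mu0h std1 std2 top])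
    qed
    have "hS \<in> HI Q" by (rule phi_zero_HI[OF hSQ phS])
    then have "hS \<in> W" using HW by blast
    then have "ih \<in> W" using split ideal_add[OF Wid _ hNW] by simp
    then show ?thesis unfolding ih_def .
  qed
  have "ideal_gen (polys_in Q) (init wz ` P) = ideal_gen (polys_in Q) (init wz ` K)"
  proof
    show "ideal_gen (polys_in Q) (init wz ` P) \<subseteq> ideal_gen (polys_in Q) (init wz ` K)"
      by (rule ideal_gen_mono[OF _ iKR]) (use PK in blast)
    show "ideal_gen (polys_in Q) (init wz ` K) \<subseteq> ideal_gen (polys_in Q) (init wz ` P)"
      by (rule ideal_gen_least[OF Wid[unfolded W_def]]) (use main W_def in blast)
  qed
  then show ?thesis unfolding pseudo_GB_def using finP PK
    by (simp add: P_def LF_def LG_def K_def wz_def)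
qed


end
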